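(* Let $n>2$ and let $f$ be a Perazzo form of degree $d$ in $S$. (1) If $d=n+1$, then the $h$-vector of $A_f$ is $(1,n+3,n+3,\dots,n+3,1)$ and $A_f$ fails the weak Lefschetz property. (2) If $d=n+2$, then the $h$-vector of $A_f$ is $(1,n+3,n+4,\dots,n+4,n+3,1)$ and $A_f$ fails the weak Lefschetz property.
   Context: $K$ is an algebraically closed field of characteristic zero. $S=K[x_0,\dots,x_n,u,v]$ and $R=K[y_0,\dots,y_n,U,V]$ acts on $S$ by differentiation ($y_i=\partial/\partial x_i$, $U=\partial/\partial u$, $V=\partial/\partial v$). A Perazzo form of degree $d$ is $f=x_0p_0+x_1p_1+\cdots+x_np_n+g$ where $p_0,\dots,p_n\in K[u,v]_{d-1}$ are linearly independent but algebraically dependent forms and $g\in K[u,v]_d$. $\operatorname{Ann}_R(f)=\{\theta\in R:\theta\circ f=0\}$ and $A_f=R/\operatorname{Ann}_R(f)$ is a graded artinian Gorenstein algebra of socle degree $d$; its $h$-vector is $h_i=\dim_K [A_f]_i$. A graded artinian algebra $A$ has the weak Lefschetz property (WLP) if there is $\ell\in[A]_1$ such that multiplication $\times\ell:[A]_i\to[A]_{i+1}$ has maximal rank (is injective or surjective) for every $i\ge 0$. *)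

theory Defs
  imports "HOL-Library.Poly_Mapping" "HOL-Computational_Algebra.Polynomial"
begin

(* In S = K[x_0..x_n,u,v] the variable x_i has index i,
   u has index n+1 and v has index n+2.  R = K[y_0..y_n,U,V] is represented by the
   same type with y_i, U, V carrying the same indices as x_i, u, v. *)
type_synonym 'a mpoly = "(nat \<Rightarrow>\<^sub>0 nat) \<Rightarrow>\<^sub>0 'a"

definition algebraically_closed :: "'a::field itself \<Rightarrow> bool" where
  "algebraically_closed _ \<longleftrightarrow> (\<forall>p::'a poly. degree p > 0 \<longrightarrow> (\<exists>x. poly p x = 0))"

definition mono_deg :: "(nat \<Rightarrow>\<^sub>0 nat) \<Rightarrow> nat" where
  "mono_deg a = (\<Sum>j\<in>Poly_Mapping.keys a. Poly_Mapping.lookup a j)"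

definition mconst :: "'a::comm_ring_1 \<Rightarrow> 'a mpoly" where
  "mconst c = Poly_Mapping.single 0 c"

definition mvar :: "nat \<Rightarrow> 'a::comm_ring_1 mpoly" where
  "mvar i = Poly_Mapping.single (Poly_Mapping.single i 1) 1"

(* p is a form of degree k involving only variables with index in V
   (the zero polynomial is a form of every degree) *)
definition homog_in :: "nat set \<Rightarrow> nat \<Rightarrow> 'a::comm_ring_1 mpoly \<Rightarrow> bool" where
  "homog_in V k p \<longleftrightarrow> (\<forall>a\<in>Poly_Mapping.keys p. Poly_Mapping.keys a \<subseteq> V \<and> mono_deg a = k)"

definition mono_le :: "(nat \<Rightarrow>\<^sub>0 nat) \<Rightarrow> (nat \<Rightarrow>\<^sub>0 nat) \<Rightarrow> bool" where
  "mono_le a b \<longleftrightarrow> (\<forall>j. Poly_Mapping.lookup a j \<le> Poly_Mapping.lookup b j)"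

(* coefficient c with  \<partial>^a (x^b) = c * x^(b-a)  for a \<le> b *)
definition diff_coeff :: "(nat \<Rightarrow>\<^sub>0 nat) \<Rightarrow> (nat \<Rightarrow>\<^sub>0 nat) \<Rightarrow> nat" where
  "diff_coeff a b = (\<Prod>j\<in>Poly_Mapping.keys a. fact (Poly_Mapping.lookup b j) div fact (Poly_Mapping.lookup b j - Poly_Mapping.lookup a j))"

(* the action  \<theta> \<circ> f  of R on S by differentiation (y_i = \<partial>/\<partial>x_i, etc.) *)
definition diff_act :: "'a::comm_ring_1 mpoly \<Rightarrow> 'a mpoly \<Rightarrow> 'a mpoly" where
  "diff_act \<theta> f = (\<Sum>a\<in>Poly_Mapping.keys \<theta>. \<Sum>b\<in>Poly_Mapping.keys f.
      if mono_le a b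
      then Poly_Mapping.single (b - a) (Poly_Mapping.lookup \<theta> a * Poly_Mapping.lookup f b * of_nat (diff_coeff a b))
      else 0)"

definition Rdeg :: "nat \<Rightarrow> nat \<Rightarrow> 'a::comm_ring_1 mpoly set" where
  "Rdeg n i = {\<theta>. homog_in {..n+2} i \<theta>}"

definition Ann :: "nat \<Rightarrow> 'a::comm_ring_1 mpoly \<Rightarrow> 'a mpoly set" where
  "Ann n f = {\<theta>. (\<forall>a\<in>Poly_Mapping.keys \<theta>. Poly_Mapping.keys a \<subseteq> {..n+2}) \<and> diff_act \<theta> f = 0}"

(* h_i = dim_K [A_f]_i = dim_K ([R]_i / [Ann_R(f)]_i): the size m of a family
   \<theta>_0..\<theta>_{m-1} in [R]_i whose classes modulo Ann_R(f) form a K-basis of [A_f]_i *)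
definition hvec :: "nat \<Rightarrow> 'a::field mpoly \<Rightarrow> nat \<Rightarrow> nat" where
  "hvec n f i = (THE m. \<exists>\<theta>::nat \<Rightarrow> 'a mpoly.
      (\<forall>j<m. \<theta> j \<in> Rdeg n i) \<and>
      (\<forall>c::nat \<Rightarrow> 'a. (\<Sum>j<m. mconst (c j) * \<theta> j) \<in> Ann n f \<longrightarrow> (\<forall>j<m. c j = 0)) \<and>
      (\<forall>\<psi>\<in>Rdeg n i. \<exists>c::nat \<Rightarrow> 'a. \<psi> - (\<Sum>j<m. mconst (c j) * \<theta> j) \<in> Ann n f))"

(* A_f = R/Ann_R(f) has the WLP: there is l \<in> [A_f]_1 (the class of a linear form of R)
   such that every multiplication map  \<times>l : [A_f]_i \<rightarrow> [A_f]_(i+1)  is injective or surjective *)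
definition has_WLP :: "nat \<Rightarrow> 'a::field mpoly \<Rightarrow> bool" where
  "has_WLP n f \<longleftrightarrow> (\<exists>l\<in>Rdeg n 1. \<forall>i.
      (\<forall>\<theta>\<in>Rdeg n i. l * \<theta> \<in> Ann n f \<longrightarrow> \<theta> \<in> Ann n f) \<or>
      (\<forall>\<psi>\<in>Rdeg n (Suc i). \<exists>\<theta>\<in>Rdeg n i. \<psi> - l * \<theta> \<in> Ann n f))"

definition msubst :: "'a::comm_ring_1 mpoly \<Rightarrow> (nat \<Rightarrow> 'a mpoly) \<Rightarrow> 'a mpoly" where
  "msubst F p = (\<Sum>a\<in>Poly_Mapping.keys F. mconst (Poly_Mapping.lookup F a) * (\<Prod>j\<in>Poly_Mapping.keys a. p j ^ Poly_Mapping.lookup a j))"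

definition is_perazzo :: "nat \<Rightarrow> nat \<Rightarrow> 'a::field mpoly \<Rightarrow> bool" where
  "is_perazzo n d f \<longleftrightarrow> (\<exists>(p::nat \<Rightarrow> 'a mpoly) g.
      (\<forall>i\<le>n. homog_in {n+1, n+2} (d - 1) (p i)) \<and>
      (\<forall>c::nat \<Rightarrow> 'a. (\<Sum>i\<le>n. mconst (c i) * p i) = 0 \<longrightarrow> (\<forall>i\<le>n. c i = 0)) \<and>
      (\<exists>F::'a mpoly. F \<noteq> 0 \<and> (\<forall>a\<in>Poly_Mapping.keys F. Poly_Mapping.keys a \<subseteq> {..n}) \<and> msubst F p = 0) \<and>
      homog_in {n+1, n+2} d g \<and>
      f = (\<Sum>i\<le>n. mvar i * p i) + g)"

end

theory Submission
  imports Defs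
begin


lemma lookup_minus_nat: "Poly_Mapping.lookup (a - b) j = Poly_Mapping.lookup a j - Poly_Mapping.lookup (b::nat \<Rightarrow>\<^sub>0 nat) j"
  by (simp add: lookup_minus)

lemma mconst_mult_lookup: "Poly_Mapping.lookup (mconst c * p) k = c * Poly_Mapping.lookup p k"
proof -
  have "mconst c * p = Poly_Mapping.map ((*) c) p" by (simp add: mconst_def mult_map_scale_conv_mult)
  then show ?thesis by (simp add: Poly_Mapping.map.rep_eq when_def)
qed

lemma mconst_mult_single: "mconst c * Poly_Mapping.single k x = Poly_Mapping.single k (c * x)"
  by (simp add: mconst_def mult_single)

lemma mconst_add: "mconst (a + b) = mconst a + mconst b"
  by (simp add: mconst_def single_add)
lemma mconst_mult: "mconst (a * b) = mconst a * (mconst b :: 'a::comm_ring_1 mpoly)"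
  by (simp add: mconst_def mult_single)
lemma mconst_one: "mconst 1 = (1 :: 'a::comm_ring_1 mpoly)"
  by (rule poly_mapping_eqI) (simp add: mconst_def lookup_one lookup_single when_def)
lemma mconst_zero[simp]: "mconst 0 = 0" by (simp add: mconst_def)

interpretation MV: vector_space "\<lambda>c (p::'a::field mpoly). mconst c * p"
  by unfold_locales (simp_all add: distrib_left distrib_right mconst_add mconst_mult mconst_one mult.assoc)

lemma poly_expand: "p = (\<Sum>k\<in>Poly_Mapping.keys p. Poly_Mapping.single k (Poly_Mapping.lookup p k))"
proof (rule poly_mapping_eqI)
  fix j
  show "Poly_Mapping.lookup p j = Poly_Mapping.lookup (\<Sum>k\<in>Poly_Mapping.keys p. Poly_Mapping.single k (Poly_Mapping.lookup p k)) j"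
    by (simp add: lookup_sum lookup_single when_def in_keys_iff)
qed

definition DT :: "(nat \<Rightarrow>\<^sub>0 nat) \<Rightarrow> (nat \<Rightarrow>\<^sub>0 nat) \<Rightarrow> 'a::comm_ring_1 \<Rightarrow> 'a mpoly" where
  "DT a b x = (if mono_le a b then Poly_Mapping.single (b - a) (x * of_nat (diff_coeff a b)) else 0)"

lemma DT_0[simp]: "DT a b 0 = 0" by (simp add: DT_def)
lemma DT_add: "DT a b (x + y) = DT a b x + DT a b y" by (simp add: DT_def distrib_right single_add)
lemma DT_scale: "DT a b (c * x) = mconst c * DT a b x" by (simp add: DT_def mconst_mult_single mult.assoc)

lemma diff_act_DT: "diff_act \<theta> f = (\<Sum>a\<in>Poly_Mapping.keys \<theta>. \<Sum>b\<in>Poly_Mapping.keys f. DT a b (Poly_Mapping.lookup \<theta> a * Poly_Mapping.lookup f b))"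
  by (simp add: diff_act_def DT_def)

lemma diff_act_superset:
  assumes "finite A" "Poly_Mapping.keys \<theta> \<subseteq> A" "finite B" "Poly_Mapping.keys f \<subseteq> B"
  shows "diff_act \<theta> f = (\<Sum>a\<in>A. \<Sum>b\<in>B. DT a b (Poly_Mapping.lookup \<theta> a * Poly_Mapping.lookup f b))"
proof -
  have "diff_act \<theta> f = (\<Sum>a\<in>Poly_Mapping.keys \<theta>. \<Sum>b\<in>B. DT a b (Poly_Mapping.lookup \<theta> a * Poly_Mapping.lookup f b))"
    unfolding diff_act_DT
    by (rule sum.cong[OF refl], rule sum.mono_neutral_left) (use assms in \<open>auto simp: in_keys_iff\<close>)
  also have "\<dots> = (\<Sum>a\<in>A. \<Sum>b\<in>B. DT a b (Poly_Mapping.lookup \<theta> a * Poly_Mapping.lookup f b))"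
    by (rule sum.mono_neutral_left) (use assms in \<open>auto simp: in_keys_iff\<close>)
  finally show ?thesis .
qed


lemma keys_mconst_mult: "Poly_Mapping.keys (mconst c * p) \<subseteq> Poly_Mapping.keys p"
  by (auto simp: in_keys_iff mconst_mult_lookup)

lemma diff_act_add_left: "diff_act (\<theta>1 + \<theta>2) f = diff_act \<theta>1 f + diff_act \<theta>2 f"
proof -
  let ?A = "Poly_Mapping.keys \<theta>1 \<union> Poly_Mapping.keys \<theta>2"
  let ?B = "Poly_Mapping.keys f"
  have k: "Poly_Mapping.keys (\<theta>1 + \<theta>2) \<subseteq> ?A" by (rule keys_add)
  have e1: "diff_act (\<theta>1 + \<theta>2) f = (\<Sum>a\<in>?A. \<Sum>b\<in>?B. DT a b (Poly_Mapping.lookup (\<theta>1 + \<theta>2) a * Poly_Mapping.lookup f b))"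
    by (rule diff_act_superset) (use k in auto)
  have e2: "diff_act \<theta>1 f = (\<Sum>a\<in>?A. \<Sum>b\<in>?B. DT a b (Poly_Mapping.lookup \<theta>1 a * Poly_Mapping.lookup f b))"
    by (rule diff_act_superset) auto
  have e3: "diff_act \<theta>2 f = (\<Sum>a\<in>?A. \<Sum>b\<in>?B. DT a b (Poly_Mapping.lookup \<theta>2 a * Poly_Mapping.lookup f b))"
    by (rule diff_act_superset) auto
  show ?thesis unfolding e1 e2 e3
    by (simp add: lookup_add distrib_right DT_add sum.distrib)
qed

lemma diff_act_add_right: "diff_act \<theta> (f1 + f2) = diff_act \<theta> f1 + diff_act \<theta> f2"
proof -
  let ?A = "Poly_Mapping.keys \<theta>"
  let ?B = "Poly_Mapping.keys f1 \<union> Poly_Mapping.keys f2"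
  have k: "Poly_Mapping.keys (f1 + f2) \<subseteq> ?B" by (rule keys_add)
  have e1: "diff_act \<theta> (f1 + f2) = (\<Sum>a\<in>?A. \<Sum>b\<in>?B. DT a b (Poly_Mapping.lookup \<theta> a * Poly_Mapping.lookup (f1+f2) b))"
    by (rule diff_act_superset) (use k in auto)
  have e2: "diff_act \<theta> f1 = (\<Sum>a\<in>?A. \<Sum>b\<in>?B. DT a b (Poly_Mapping.lookup \<theta> a * Poly_Mapping.lookup f1 b))"
    by (rule diff_act_superset) auto
  have e3: "diff_act \<theta> f2 = (\<Sum>a\<in>?A. \<Sum>b\<in>?B. DT a b (Poly_Mapping.lookup \<theta> a * Poly_Mapping.lookup f2 b))"
    by (rule diff_act_superset) auto
  show ?thesis unfolding e1 e2 e3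
    by (simp add: lookup_add distrib_left DT_add sum.distrib)
qed

lemma diff_act_scale_left: "diff_act (mconst c * \<theta>) f = mconst c * diff_act \<theta> f"
proof -
  have k: "Poly_Mapping.keys (mconst c * \<theta>) \<subseteq> Poly_Mapping.keys \<theta>" by (rule keys_mconst_mult)
  have e1: "diff_act (mconst c * \<theta>) f = (\<Sum>a\<in>Poly_Mapping.keys \<theta>. \<Sum>b\<in>Poly_Mapping.keys f. DT a b (Poly_Mapping.lookup (mconst c * \<theta>) a * Poly_Mapping.lookup f b))"
    by (rule diff_act_superset) (use k in auto)
  show ?thesis
    unfolding e1 diff_act_DT[of \<theta> f]
    by (simp add: mconst_mult_lookup mult.assoc DT_scale sum_distrib_left)
qed

lemma diff_act_scale_right: "diff_act \<theta> (mconst c * f) = mconst c * diff_act \<theta> f"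
proof -
  have k: "Poly_Mapping.keys (mconst c * f) \<subseteq> Poly_Mapping.keys f" by (rule keys_mconst_mult)
  have e1: "diff_act \<theta> (mconst c * f) = (\<Sum>a\<in>Poly_Mapping.keys \<theta>. \<Sum>b\<in>Poly_Mapping.keys f. DT a b (Poly_Mapping.lookup \<theta> a * Poly_Mapping.lookup (mconst c * f) b))"
    by (rule diff_act_superset) (use k in auto)
  show ?thesis
    unfolding e1 diff_act_DT[of \<theta> f]
    by (simp add: mconst_mult_lookup mult.left_commute DT_scale sum_distrib_left)
qed

lemma diff_act_zero_left[simp]: "diff_act 0 f = 0" by (simp add: diff_act_def)
lemma diff_act_zero_right[simp]: "diff_act \<theta> 0 = 0" by (simp add: diff_act_def)

lemma diff_act_sum_left: "diff_act (\<Sum>i\<in>I. \<theta> i) f = (\<Sum>i\<in>I. diff_act (\<theta> i) f)"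
  by (induction I rule: infinite_finite_induct) (simp_all add: diff_act_add_left)
lemma diff_act_sum_right: "diff_act \<theta> (\<Sum>i\<in>I. f i) = (\<Sum>i\<in>I. diff_act \<theta> (f i))"
  by (induction I rule: infinite_finite_induct) (simp_all add: diff_act_add_right)

lemma diff_act_uminus_left: "diff_act (- \<theta>) f = - diff_act \<theta> f"
  using diff_act_add_left[of "-\<theta>" \<theta> f] by (simp add: eq_neg_iff_add_eq_0)
lemma diff_act_diff_left: "diff_act (\<theta>1 - \<theta>2) f = diff_act \<theta>1 f - diff_act \<theta>2 f"
  using diff_act_add_left[of \<theta>1 "-\<theta>2" f] by (simp add: diff_act_uminus_left)
lemma diff_act_uminus_right: "diff_act \<theta> (- f) = - diff_act \<theta> f"
  using diff_act_add_right[of \<theta> "-f" f] by (simp add: eq_neg_iff_add_eq_0)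
lemma diff_act_diff_right: "diff_act \<theta> (f1 - f2) = diff_act \<theta> f1 - diff_act \<theta> f2"
  using diff_act_add_right[of \<theta> f1 "-f2"] by (simp add: diff_act_uminus_right)

lemma diff_act_single: "diff_act (Poly_Mapping.single a c) (Poly_Mapping.single b e) = DT a b (c * e)"
  by (subst diff_act_superset[of "{a}" _ "{b}"]) auto


definition ff :: "nat \<Rightarrow> nat \<Rightarrow> nat" where "ff x y = fact x div fact (x - y)"

lemma ff_mult: "y \<le> x \<Longrightarrow> ff x y * fact (x - y) = fact x"
  unfolding ff_def by (simp add: fact_dvd)

lemma ff_add: assumes "y1 + y2 \<le> x" shows "ff x (y1 + y2) = ff x y2 * ff (x - y2) y1"
proof -
  have "ff x (y1 + y2) * fact (x - (y1 + y2)) = fact x" using assms by (simp add: ff_mult)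
  also have "fact x = ff x y2 * fact (x - y2)" using assms by (simp add: ff_mult)
  also have "fact (x - y2) = ff (x - y2) y1 * fact (x - y2 - y1)" using assms ff_mult[of y1 "x - y2"] by simp
  finally have "ff x (y1 + y2) * fact (x - (y1 + y2)) = (ff x y2 * ff (x - y2) y1) * fact (x - (y1 + y2))"
    by (simp add: algebra_simps)
  then show ?thesis by simp
qed

lemma ff_zero[simp]: "ff x 0 = 1" by (simp add: ff_def)
lemma ff_pos: "y \<le> x \<Longrightarrow> ff x y > 0"
  using ff_mult[of y x] by (metis fact_gt_zero gr0I mult_is_0 not_less0)

lemma diff_coeff_superset:
  assumes "finite K" "Poly_Mapping.keys a \<subseteq> K"
  shows "diff_coeff a b = (\<Prod>j\<in>K. ff (Poly_Mapping.lookup b j) (Poly_Mapping.lookup a j))"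
  unfolding diff_coeff_def ff_def[symmetric]
  by (rule prod.mono_neutral_left) (use assms in \<open>auto simp: in_keys_iff\<close>)

lemma mono_le_add: "mono_le (a1 + a2) b \<longleftrightarrow> mono_le a2 b \<and> mono_le a1 (b - a2)"
  by (auto simp: mono_le_def lookup_add lookup_minus_nat) (metis le_diff_conv2 add.commute le_add2 order_trans)+

lemma diff_coeff_add:
  assumes "mono_le (a1 + a2) b"
  shows "diff_coeff (a1 + a2) b = diff_coeff a2 b * diff_coeff a1 (b - a2)"
proof -
  let ?K = "Poly_Mapping.keys a1 \<union> Poly_Mapping.keys a2"
  have k: "Poly_Mapping.keys (a1 + a2) \<subseteq> ?K" by (rule keys_add)
  have "diff_coeff (a1 + a2) b = (\<Prod>j\<in>?K. ff (Poly_Mapping.lookup b j) (Poly_Mapping.lookup (a1+a2) j))"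
    by (rule diff_coeff_superset) (use k in auto)
  also have "\<dots> = (\<Prod>j\<in>?K. ff (Poly_Mapping.lookup b j) (Poly_Mapping.lookup a2 j) * ff (Poly_Mapping.lookup (b - a2) j) (Poly_Mapping.lookup a1 j))"
    by (rule prod.cong[OF refl]) (use assms in \<open>auto simp: mono_le_def lookup_add lookup_minus_nat intro!: ff_add\<close>)
  also have "\<dots> = diff_coeff a2 b * diff_coeff a1 (b - a2)"
    by (simp add: prod.distrib diff_coeff_superset[of ?K])
  finally show ?thesis .
qed

lemma diff_act_single_comp:
  "diff_act (Poly_Mapping.single (a1 + a2) (c1 * c2)) (Poly_Mapping.single b e)
   = diff_act (Poly_Mapping.single a1 c1) (diff_act (Poly_Mapping.single a2 c2) (Poly_Mapping.single b e))"
proof (cases "mono_le a2 b")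
  case False
  then show ?thesis unfolding diff_act_single by (simp add: DT_def mono_le_add)
next
  case True
  note t = this
  show ?thesis
  proof (cases "mono_le a1 (b - a2)")
    case False
    have "\<not> mono_le (a1 + a2) b" using False by (simp add: mono_le_add)
    then show ?thesis using t False by (simp add: diff_act_single DT_def)
  next
    case True
    have m: "mono_le (a1 + a2) b" using t True by (simp add: mono_le_add)
    have e: "b - (a1 + a2) = b - a2 - a1" by (simp add: diff_diff_add add.commute)
    show ?thesis using t True m
      by (simp add: diff_act_single DT_def e diff_coeff_add[OF m] mult.assoc mult.left_commute)
  qed
qed

lemma sum3_rev: "(\<Sum>a\<in>A. \<Sum>b\<in>B. \<Sum>c\<in>C. g a b c) = (\<Sum>c\<in>C. \<Sum>b\<in>B. \<Sum>a\<in>A. g a b c)"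
proof -
  have "(\<Sum>a\<in>A. \<Sum>b\<in>B. \<Sum>c\<in>C. g a b c) = (\<Sum>a\<in>A. \<Sum>c\<in>C. \<Sum>b\<in>B. g a b c)"
    by (rule sum.cong[OF refl], rule sum.swap)
  also have "\<dots> = (\<Sum>c\<in>C. \<Sum>a\<in>A. \<Sum>b\<in>B. g a b c)" by (rule sum.swap)
  also have "\<dots> = (\<Sum>c\<in>C. \<Sum>b\<in>B. \<Sum>a\<in>A. g a b c)" by (rule sum.cong[OF refl], rule sum.swap)
  finally show ?thesis .
qed

lemma diff_act_mult: "diff_act (\<theta>1 * \<theta>2) h = diff_act \<theta>1 (diff_act \<theta>2 h)"
proof -
  let ?K1 = "Poly_Mapping.keys \<theta>1" and ?K2 = "Poly_Mapping.keys \<theta>2" and ?Kh = "Poly_Mapping.keys h"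
  let ?l1 = "Poly_Mapping.lookup \<theta>1" and ?l2 = "Poly_Mapping.lookup \<theta>2" and ?lh = "Poly_Mapping.lookup h"
  have p: "\<theta>1 * \<theta>2 = (\<Sum>a1\<in>?K1. \<Sum>a2\<in>?K2. Poly_Mapping.single (a1 + a2) (?l1 a1 * ?l2 a2))"
  proof -
    have "\<theta>1 * \<theta>2 = (\<Sum>a1\<in>?K1. Poly_Mapping.single a1 (?l1 a1)) * (\<Sum>a2\<in>?K2. Poly_Mapping.single a2 (?l2 a2))"
      using poly_expand[of \<theta>1] poly_expand[of \<theta>2] by simp
    then show ?thesis by (simp add: sum_product mult_single)
  qed
  have h: "h = (\<Sum>b\<in>?Kh. Poly_Mapping.single b (?lh b))" by (rule poly_expand)
  have t1: "\<theta>1 = (\<Sum>a1\<in>?K1. Poly_Mapping.single a1 (?l1 a1))" by (rule poly_expand)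
  have t2: "\<theta>2 = (\<Sum>a2\<in>?K2. Poly_Mapping.single a2 (?l2 a2))" by (rule poly_expand)
  have "diff_act (\<theta>1 * \<theta>2) h = (\<Sum>a1\<in>?K1. \<Sum>a2\<in>?K2. \<Sum>b\<in>?Kh.
      diff_act (Poly_Mapping.single (a1 + a2) (?l1 a1 * ?l2 a2)) (Poly_Mapping.single b (?lh b)))"
    apply (subst p)
    apply (subst (1) h)
    apply (simp only: diff_act_sum_left diff_act_sum_right)
    apply (rule trans[OF sum.swap])
    apply (rule sum.cong[OF refl])
    apply (rule sum.swap)
    done
  also have "\<dots> = (\<Sum>a1\<in>?K1. \<Sum>a2\<in>?K2. \<Sum>b\<in>?Kh.
      diff_act (Poly_Mapping.single a1 (?l1 a1)) (diff_act (Poly_Mapping.single a2 (?l2 a2)) (Poly_Mapping.single b (?lh b))))"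
    by (simp only: diff_act_single_comp)
  also have "\<dots> = diff_act (\<Sum>a1\<in>?K1. Poly_Mapping.single a1 (?l1 a1)) (diff_act (\<Sum>a2\<in>?K2. Poly_Mapping.single a2 (?l2 a2)) (\<Sum>b\<in>?Kh. Poly_Mapping.single b (?lh b)))"
    apply (simp only: diff_act_sum_left diff_act_sum_right)
    apply (rule sum3_rev)
    done
  also have "\<dots> = diff_act \<theta>1 (diff_act \<theta>2 h)"
    using t1 t2 h by simp
  finally show ?thesis .
qed

lemma diff_act_mult_comm: "diff_act \<theta>1 (diff_act \<theta>2 h) = diff_act \<theta>2 (diff_act \<theta>1 h)"
  by (metis diff_act_mult mult.commute)


lemma mono_deg_superset:
  assumes "finite K" "Poly_Mapping.keys a \<subseteq> K"
  shows "mono_deg a = (\<Sum>j\<in>K. Poly_Mapping.lookup a j)"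
  unfolding mono_deg_def by (rule sum.mono_neutral_left) (use assms in \<open>auto simp: in_keys_iff\<close>)

lemma mono_deg_add: "mono_deg (a + b) = mono_deg a + mono_deg b"
proof -
  let ?K = "Poly_Mapping.keys a \<union> Poly_Mapping.keys b"
  have "mono_deg (a + b) = (\<Sum>j\<in>?K. Poly_Mapping.lookup (a+b) j)"
    by (rule mono_deg_superset) (use keys_add[of a b] in auto)
  also have "\<dots> = (\<Sum>j\<in>?K. Poly_Mapping.lookup a j) + (\<Sum>j\<in>?K. Poly_Mapping.lookup b j)"
    by (simp add: lookup_add sum.distrib)
  also have "\<dots> = mono_deg a + mono_deg b" by (simp add: mono_deg_superset[of ?K])
  finally show ?thesis .
qed

lemma mono_le_diff_add: "mono_le a b \<Longrightarrow> (b - a) + a = (b::nat \<Rightarrow>\<^sub>0 nat)"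
  by (rule poly_mapping_eqI) (auto simp: mono_le_def lookup_add lookup_minus_nat)

lemma mono_deg_diff: "mono_le a b \<Longrightarrow> mono_deg (b - a) = mono_deg b - mono_deg a"
  using mono_deg_add[of "b - a" a] mono_le_diff_add[of a b] by simp

lemma mono_deg_le: "mono_le a b \<Longrightarrow> mono_deg a \<le> mono_deg b"
  using mono_deg_add[of "b - a" a] mono_le_diff_add[of a b] by simp

lemma keys_diff_nat: "Poly_Mapping.keys (b - a) \<subseteq> Poly_Mapping.keys (b::nat \<Rightarrow>\<^sub>0 nat)"
  by (auto simp: in_keys_iff lookup_minus_nat)

lemma mono_deg_zero_iff: "mono_deg a = 0 \<longleftrightarrow> a = 0"
proof
  assume "mono_deg a = 0"
  then have "\<forall>j\<in>Poly_Mapping.keys a. Poly_Mapping.lookup a j = 0" unfolding mono_deg_def by simp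
  then show "a = 0" by (metis in_keys_iff keys_eq_empty ex_in_conv)
qed (simp add: mono_deg_def)

lemma mono_deg_single[simp]: "mono_deg (Poly_Mapping.single j k) = k"
  by (simp add: mono_deg_def)

lemma homog_zero[simp]: "homog_in V k 0" by (simp add: homog_in_def)
lemma homog_add: "homog_in V k p \<Longrightarrow> homog_in V k q \<Longrightarrow> homog_in V k (p + q)"
  unfolding homog_in_def using keys_add[of p q] by blast
lemma homog_uminus: "homog_in V k p \<Longrightarrow> homog_in V k (- p)"
  unfolding homog_in_def by (simp add: keys_minus)
lemma homog_diff: "homog_in V k p \<Longrightarrow> homog_in V k q \<Longrightarrow> homog_in V k (p - q)"
  using homog_add[of V k p "-q"] homog_uminus by fastforce
lemma homog_scale: "homog_in V k p \<Longrightarrow> homog_in V k (mconst c * p)"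
  unfolding homog_in_def using keys_mconst_mult by blast
lemma homog_sum: "(\<And>i. i \<in> I \<Longrightarrow> homog_in V k (p i)) \<Longrightarrow> homog_in V k (\<Sum>i\<in>I. p i)"
  by (induction I rule: infinite_finite_induct) (auto intro: homog_add)
lemma homog_mono: "V \<subseteq> W \<Longrightarrow> homog_in V k p \<Longrightarrow> homog_in W k p"
  unfolding homog_in_def by blast
lemma homog_single: "Poly_Mapping.keys e \<subseteq> V \<Longrightarrow> mono_deg e = k \<Longrightarrow> homog_in V k (Poly_Mapping.single e c)"
  unfolding homog_in_def by auto

lemma homog_mult: "homog_in V k p \<Longrightarrow> homog_in V k' q \<Longrightarrow> homog_in V (k + k') (p * q)"
  unfolding homog_in_def
proof
  fix a assume h: "\<forall>a\<in>Poly_Mapping.keys p. Poly_Mapping.keys a \<subseteq> V \<and> mono_deg a = k"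
    "\<forall>a\<in>Poly_Mapping.keys q. Poly_Mapping.keys a \<subseteq> V \<and> mono_deg a = k'"
    and a: "a \<in> Poly_Mapping.keys (p * q)"
  then obtain b c where "a = b + c" "b \<in> Poly_Mapping.keys p" "c \<in> Poly_Mapping.keys q"
    using keys_mult[of p q] by blast
  moreover have "Poly_Mapping.keys b \<subseteq> V" "Poly_Mapping.keys c \<subseteq> V" "mono_deg b = k" "mono_deg c = k'"
    using h \<open>b \<in> _\<close> \<open>c \<in> _\<close> by auto
  ultimately show "Poly_Mapping.keys a \<subseteq> V \<and> mono_deg a = k + k'"
    using keys_add[of b c] by (auto simp: mono_deg_add)
qed

lemma homog_diff_act:
  fixes q \<theta> :: "'a::comm_ring_1 mpoly"
  assumes hq: "homog_in V k q" and ht: "homog_in W s \<theta>"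
  shows "homog_in V (k - s) (diff_act \<theta> q)" "s > k \<Longrightarrow> diff_act \<theta> q = 0"
proof -
  have "diff_act \<theta> q = (\<Sum>a\<in>Poly_Mapping.keys \<theta>. \<Sum>b\<in>Poly_Mapping.keys q. DT a b (Poly_Mapping.lookup \<theta> a * Poly_Mapping.lookup q b))"
    by (rule diff_act_DT)
  moreover have "homog_in V (k - s) (DT a b (x::'a))" if "a \<in> Poly_Mapping.keys \<theta>" "b \<in> Poly_Mapping.keys q" for a b x
  proof (cases "mono_le a b")
    case True
    have "Poly_Mapping.keys b \<subseteq> V" "mono_deg b = k" "mono_deg a = s" using that hq ht unfolding homog_in_def by auto
    then show ?thesis using True keys_diff_nat[of b a] unfolding DT_def homog_in_def
      by (auto simp: mono_deg_diff)
  qed (simp add: DT_def)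
  moreover have "DT a b (x::'a) = 0" if "a \<in> Poly_Mapping.keys \<theta>" "b \<in> Poly_Mapping.keys q" "s > k" for a b x
    using that hq ht mono_deg_le[of a b] unfolding DT_def homog_in_def by auto
  ultimately show "homog_in V (k - s) (diff_act \<theta> q)" "s > k \<Longrightarrow> diff_act \<theta> q = 0"
    by (auto intro!: homog_sum)
qed

lemma homog_zero_deg: "homog_in V 0 q \<Longrightarrow> q = mconst (Poly_Mapping.lookup q 0)"
proof (rule poly_mapping_eqI)
  fix k assume "homog_in V 0 q"
  then have "k \<in> Poly_Mapping.keys q \<Longrightarrow> k = 0" unfolding homog_in_def by (auto simp: mono_deg_zero_iff)
  then show "Poly_Mapping.lookup q k = Poly_Mapping.lookup (mconst (Poly_Mapping.lookup q 0)) k"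
    by (cases "k = 0") (auto simp: mconst_def lookup_single in_keys_iff)
qed


definition EXP :: "nat \<Rightarrow> nat \<Rightarrow> nat \<Rightarrow> (nat \<Rightarrow>\<^sub>0 nat)" where
  "EXP n a b = Poly_Mapping.single (n+1) a + Poly_Mapping.single (n+2) b"
definition M :: "nat \<Rightarrow> nat \<Rightarrow> nat \<Rightarrow> 'a::comm_ring_1 mpoly" where
  "M n a b = Poly_Mapping.single (EXP n a b) 1"

lemma lookup_EXP: "Poly_Mapping.lookup (EXP n a b) j = (if j = n+1 then a else if j = n+2 then b else 0)"
  by (auto simp: EXP_def lookup_add lookup_single when_def)

lemma keys_EXP: "Poly_Mapping.keys (EXP n a b) \<subseteq> {n+1, n+2}"
  by (auto simp: in_keys_iff lookup_EXP split: if_splits)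

lemma mono_deg_EXP: "mono_deg (EXP n a b) = a + b"
  by (simp add: EXP_def mono_deg_add)

lemma EXP_inj[simp]: "EXP n a b = EXP n a' b' \<longleftrightarrow> a = a' \<and> b = b'"
proof
  assume h: "EXP n a b = EXP n a' b'"
  have "Poly_Mapping.lookup (EXP n a b) (n+1) = Poly_Mapping.lookup (EXP n a' b') (n+1)"
    "Poly_Mapping.lookup (EXP n a b) (n+2) = Poly_Mapping.lookup (EXP n a' b') (n+2)" using h by simp_all
  then show "a = a' \<and> b = b'" by (simp add: lookup_EXP)
qed simp

lemma EXP_of: "Poly_Mapping.keys e \<subseteq> {n+1, n+2} \<Longrightarrow> e = EXP n (Poly_Mapping.lookup e (n+1)) (Poly_Mapping.lookup e (n+2))"
  by (rule poly_mapping_eqI) (auto simp: lookup_EXP in_keys_iff)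

lemma EXP_add: "EXP n a b + EXP n a' b' = EXP n (a + a') (b + b')"
  by (rule poly_mapping_eqI) (simp add: lookup_add lookup_EXP)

lemma EXP_zero[simp]: "EXP n 0 0 = 0"
  by (simp add: EXP_def)

lemma homog_M: "homog_in {n+1, n+2} (a + b) (M n a b)"
  unfolding M_def by (rule homog_single) (use keys_EXP[of n a b] mono_deg_EXP in simp_all)

lemma homog_M': "k = a + b \<Longrightarrow> homog_in {n+1, n+2} k (M n a b)"
  using homog_M by blast

lemma M_mult: "M n a b * M n a' b' = M n (a + a') (b + b')"
  by (simp add: M_def mult_single EXP_add)

lemma M_00[simp]: "M n 0 0 = 1"
  by (simp add: M_def)

lemma mono_le_EXP: "mono_le (EXP n a b) (EXP n a' b') \<longleftrightarrow> a \<le> a' \<and> b \<le> b'"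
proof
  assume h: "mono_le (EXP n a b) (EXP n a' b')"
  have "Poly_Mapping.lookup (EXP n a b) (n+1) \<le> Poly_Mapping.lookup (EXP n a' b') (n+1)"
    "Poly_Mapping.lookup (EXP n a b) (n+2) \<le> Poly_Mapping.lookup (EXP n a' b') (n+2)" using h unfolding mono_le_def by blast+
  then show "a \<le> a' \<and> b \<le> b'" by (simp add: lookup_EXP)
qed (auto simp: mono_le_def lookup_EXP)

lemma EXP_minus: "EXP n a' b' - EXP n a b = EXP n (a' - a) (b' - b)"
  by (rule poly_mapping_eqI) (simp add: lookup_minus_nat lookup_EXP)

lemma diff_coeff_EXP: "diff_coeff (EXP n a b) (EXP n a' b') = ff a' a * ff b' b"
proof -
  have "diff_coeff (EXP n a b) (EXP n a' b') = (\<Prod>j\<in>{n+1, n+2}. ff (Poly_Mapping.lookup (EXP n a' b') j) (Poly_Mapping.lookup (EXP n a b) j))"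
    by (rule diff_coeff_superset) (use keys_EXP[of n a b] in simp_all)
  then show ?thesis by (simp add: lookup_EXP)
qed

lemma diff_M: "diff_act (M n a b) (M n a' b') = (if a \<le> a' \<and> b \<le> b' then mconst (of_nat (ff a' a * ff b' b)) * M n (a' - a) (b' - b) else 0)"
  unfolding M_def diff_act_single DT_def mono_le_EXP EXP_minus diff_coeff_EXP
  by (simp add: mconst_mult_single)

lemma ff_self: "ff x x = fact x" by (simp add: ff_def)

definition fsum :: "nat \<Rightarrow> nat \<Rightarrow> (nat \<Rightarrow> 'a::comm_ring_1) \<Rightarrow> 'a mpoly" where
  "fsum n k c = (\<Sum>a\<le>k. mconst (c a) * M n a (k - a))"

lemma lookup_fsum: "a0 \<le> k \<Longrightarrow> Poly_Mapping.lookup (fsum n k c) (EXP n a0 (k - a0)) = c a0"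
proof -
  assume a0: "a0 \<le> k"
  have "Poly_Mapping.lookup (fsum n k c) (EXP n a0 (k - a0)) = (\<Sum>a\<le>k. if a = a0 then c a else 0)"
    unfolding fsum_def lookup_sum M_def mconst_mult_single
    by (rule sum.cong[OF refl]) (auto simp: lookup_single when_def)
  then show ?thesis using a0 by simp
qed

lemma fsum_zero: "fsum n k c = 0 \<Longrightarrow> a \<le> k \<Longrightarrow> c a = 0"
  using lookup_fsum[of a k n c] by simp

lemma homog_fsum: "homog_in {n+1, n+2} k (fsum n k c)"
  unfolding fsum_def by (rule homog_sum, rule homog_scale, rule homog_M') auto

lemma form_repr:
  assumes "homog_in {n+1, n+2} k q"
  shows "q = fsum n k (\<lambda>a. Poly_Mapping.lookup q (EXP n a (k - a)))"
proof (rule poly_mapping_eqI)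
  fix e
  show "Poly_Mapping.lookup q e = Poly_Mapping.lookup (fsum n k (\<lambda>a. Poly_Mapping.lookup q (EXP n a (k - a)))) e"
  proof (cases "e \<in> Poly_Mapping.keys q")
    case True
    then have ke: "Poly_Mapping.keys e \<subseteq> {n+1, n+2}" "mono_deg e = k" using assms unfolding homog_in_def by auto
    then have e: "e = EXP n (Poly_Mapping.lookup e (n+1)) (Poly_Mapping.lookup e (n+2))" by (intro EXP_of) simp
    then have "Poly_Mapping.lookup e (n+1) + Poly_Mapping.lookup e (n+2) = k" using ke(2) mono_deg_EXP by metis
    then have "e = EXP n (Poly_Mapping.lookup e (n+1)) (k - Poly_Mapping.lookup e (n+1))" "Poly_Mapping.lookup e (n+1) \<le> k"
      using e by auto
    then show ?thesis by (metis lookup_fsum)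
  next
    case False
    then have l: "Poly_Mapping.lookup q e = 0" by (simp add: in_keys_iff)
    have "Poly_Mapping.lookup (fsum n k (\<lambda>a. Poly_Mapping.lookup q (EXP n a (k - a)))) e = 0"
      unfolding fsum_def lookup_sum M_def mconst_mult_single
      by (rule sum.neutral) (use l in \<open>auto simp: lookup_single when_def\<close>)
    then show ?thesis using l by simp
  qed
qed

lemma pairing:
  assumes "homog_in {n+1, n+2} k D" "a0 \<le> k"
  shows "diff_act D (M n a0 (k - a0)) = mconst (Poly_Mapping.lookup D (EXP n a0 (k - a0)) * of_nat (fact a0 * fact (k - a0)))"
proof -
  let ?c = "\<lambda>a. Poly_Mapping.lookup D (EXP n a (k - a))"
  have "diff_act D (M n a0 (k - a0)) = diff_act (fsum n k ?c) (M n a0 (k - a0))"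
    using form_repr[OF assms(1)] by simp
  also have "\<dots> = (\<Sum>a\<le>k. mconst (?c a) * diff_act (M n a (k - a)) (M n a0 (k - a0)))"
    by (simp add: fsum_def diff_act_sum_left diff_act_scale_left)
  also have "\<dots> = (\<Sum>a\<le>k. if a = a0 then mconst (?c a) * mconst (of_nat (fact a0 * fact (k - a0))) else 0)"
    by (rule sum.cong[OF refl]) (use assms(2) in \<open>auto simp: diff_M ff_self\<close>)
  also have "\<dots> = mconst (?c a0) * mconst (of_nat (fact a0 * fact (k - a0)))"
    using assms(2) by simp
  finally show ?thesis by (simp add: mconst_mult)
qed

lemma lookup_mult_single:
  "Poly_Mapping.lookup (q * Poly_Mapping.single e c) y = (if mono_le e y then Poly_Mapping.lookup q (y - e) * c else 0)"
proof -
  have "q * Poly_Mapping.single e c = (\<Sum>k\<in>Poly_Mapping.keys q. Poly_Mapping.single (k + e) (Poly_Mapping.lookup q k * c))"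
    by (subst (1) poly_expand[of q]) (simp add: sum_distrib_right mult_single)
  then have "Poly_Mapping.lookup (q * Poly_Mapping.single e c) y = (\<Sum>k\<in>Poly_Mapping.keys q. if y = k + e then Poly_Mapping.lookup q k * c else 0)"
    by (simp add: lookup_sum lookup_single when_def eq_commute)
  also have "\<dots> = (if mono_le e y then Poly_Mapping.lookup q (y - e) * c else 0)"
  proof (cases "mono_le e y")
    case True
    have iff: "y = k + e \<longleftrightarrow> k = y - e" for k
      using True mono_le_diff_add[of e y] by (metis add_diff_cancel_right')
    show ?thesis using True
      by (simp add: iff sum.delta in_keys_iff)
  next
    case False
    have "y \<noteq> k + e" for k using False unfolding mono_le_def by (auto simp: lookup_add)
    then show ?thesis using False by simp
  qed
  finally show ?thesis .
qed


definition fam_indep :: "(nat \<Rightarrow> 'a::field mpoly) \<Rightarrow> nat \<Rightarrow> bool" where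
  "fam_indep w m \<longleftrightarrow> (\<forall>c. (\<Sum>j<m. mconst (c j) * w j) = 0 \<longrightarrow> (\<forall>j<m. c j = 0))"

lemma fam_indep_inj:
  assumes "fam_indep w m" shows "inj_on w {..<m}"
proof (rule inj_onI, rule ccontr)
  fix j k assume jk: "j \<in> {..<m}" "k \<in> {..<m}" "w j = w k" "j \<noteq> k"
  let ?c = "\<lambda>i. if i = j then 1 else if i = k then -1 else (0::'a)"
  have "(\<Sum>i<m. mconst (?c i) * w i) = (\<Sum>i<m. (if i = j then w j else 0) + (if i = k then - w k else 0))"
    by (rule sum.cong[OF refl]) (use jk in \<open>auto simp: mconst_one mconst_def[symmetric]\<close>)
  also have "\<dots> = 0" using jk by (simp add: sum.distrib)
  finally have z: "(\<Sum>i<m. mconst (?c i) * w i) = 0" .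
  have "\<forall>i<m. ?c i = 0" using spec[OF assms[unfolded fam_indep_def], of ?c] z by blast
  then show False using jk by auto
qed

lemma mconst_neg_one: "mconst (-1) * p = - (p::'a::comm_ring_1 mpoly)"
  by (rule poly_mapping_eqI) (simp add: mconst_mult_lookup)

lemma fam_indep_independent:
  assumes "fam_indep w m" shows "MV.independent (w ` {..<m})"
proof (rule MV.independent_if_scalars_zero)
  show "finite (w ` {..<m})" by simp
  fix f x assume s: "(\<Sum>x\<in>w ` {..<m}. mconst (f x) * x) = 0" and x: "x \<in> w ` {..<m}"
  have "(\<Sum>x\<in>w ` {..<m}. mconst (f x) * x) = (\<Sum>j<m. mconst (f (w j)) * w j)"
    by (rule sum.reindex[unfolded comp_def]) (rule fam_indep_inj[OF assms])
  with s have "\<forall>j<m. f (w j) = 0" using assms unfolding fam_indep_def by metis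
  with x show "f x = 0" by auto
qed

lemma fam_steinitz:
  assumes "fam_indep w m" "finite T" "\<And>j. j < m \<Longrightarrow> w j \<in> MV.span T"
  shows "m \<le> card T"
proof -
  have "card (w ` {..<m}) \<le> card T"
    using MV.independent_span_bound[OF assms(2) fam_indep_independent[OF assms(1)]] assms(3) by auto
  moreover have "card (w ` {..<m}) = m" using card_image[OF fam_indep_inj[OF assms(1)]] by simp
  ultimately show ?thesis by simp
qed

lemma span_fam_iff:
  fixes w :: "nat \<Rightarrow> 'a::field mpoly"
  shows "x \<in> MV.span (w ` {..<m}) \<longleftrightarrow> (\<exists>c. x = (\<Sum>j<m. mconst (c j) * w j))"
proof
  assume "x \<in> MV.span (w ` {..<m})"
  then show "\<exists>c. x = (\<Sum>j<m. mconst (c j) * w j)"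
  proof (induction rule: MV.span_induct_alt)
    case base
    show ?case by (rule exI[of _ "\<lambda>_. 0"]) simp
  next
    case (step c x y)
    then obtain j0 where j0: "j0 < m" "x = w j0" by auto
    from step obtain d where d: "y = (\<Sum>j<m. mconst (d j) * w j)" by blast
    have "(\<Sum>j<m. mconst ((if j = j0 then c else 0) + d j) * w j) = (\<Sum>j<m. (if j = j0 then mconst c * w j else 0) + mconst (d j) * w j)"
      by (rule sum.cong) (auto simp: mconst_add distrib_right)
    also have "\<dots> = (\<Sum>j<m. if j = j0 then mconst c * w j else 0) + y" by (simp only: sum.distrib d)
    also have "\<dots> = mconst c * x + y" using j0 by (simp add: sum.delta[OF finite_lessThan])
    finally have "mconst c * x + y = (\<Sum>j<m. mconst ((if j = j0 then c else 0) + d j) * w j)" by simp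
    then show ?case by (rule exI[of _ "\<lambda>j. (if j = j0 then c else 0) + d j"])
  qed
next
  assume "\<exists>c. x = (\<Sum>j<m. mconst (c j) * w j)"
  then obtain c where c: "x = (\<Sum>j<m. mconst (c j) * w j)" by blast
  have w: "\<And>j. j < m \<Longrightarrow> w j \<in> MV.span (w ` {..<m})" by (rule MV.span_base) auto
  show "x \<in> MV.span (w ` {..<m})" unfolding c by (rule MV.span_sum, rule MV.span_scale) (use w in auto)
qed

lemma Rdeg_sum: "(\<And>j. j \<in> I \<Longrightarrow> \<theta> j \<in> Rdeg n i) \<Longrightarrow> (\<Sum>j\<in>I. mconst (c j) * \<theta> j) \<in> Rdeg n i"
  unfolding Rdeg_def by (auto intro!: homog_sum homog_scale)

lemma Rdeg_diff: "a \<in> Rdeg n i \<Longrightarrow> b \<in> Rdeg n i \<Longrightarrow> a - b \<in> Rdeg n i"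
  unfolding Rdeg_def by (auto intro: homog_diff)

lemma Rdeg_keys: "a \<in> Rdeg n i \<Longrightarrow> \<forall>e\<in>Poly_Mapping.keys a. Poly_Mapping.keys e \<subseteq> {..n+2}"
  unfolding Rdeg_def homog_in_def by auto

lemma Rdeg_Ann: "a \<in> Rdeg n i \<Longrightarrow> a \<in> Ann n f \<longleftrightarrow> diff_act a f = 0"
  unfolding Ann_def using Rdeg_keys by blast

lemma diff_act_lincomb: "diff_act (\<Sum>j\<in>I. mconst (c j) * \<theta> j) f = (\<Sum>j\<in>I. mconst (c j) * diff_act (\<theta> j) f)"
  by (simp add: diff_act_sum_left diff_act_scale_left)

lemma hvec_eq:
  fixes f :: "'a::field mpoly"
  assumes R: "\<And>j. j < m \<Longrightarrow> \<theta> j \<in> Rdeg n i"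
    and I: "fam_indep (\<lambda>j. diff_act (\<theta> j) f) m"
    and S: "\<And>\<psi>. \<psi> \<in> Rdeg n i \<Longrightarrow> diff_act \<psi> f \<in> MV.span ((\<lambda>j. diff_act (\<theta> j) f) ` {..<m})"
  shows "hvec n f i = m"
  unfolding hvec_def
proof (rule the_equality)
  show "\<exists>\<theta>::nat \<Rightarrow> 'a mpoly. (\<forall>j<m. \<theta> j \<in> Rdeg n i) \<and>
      (\<forall>c::nat \<Rightarrow> 'a. (\<Sum>j<m. mconst (c j) * \<theta> j) \<in> Ann n f \<longrightarrow> (\<forall>j<m. c j = 0)) \<and>
      (\<forall>\<psi>\<in>Rdeg n i. \<exists>c::nat \<Rightarrow> 'a. \<psi> - (\<Sum>j<m. mconst (c j) * \<theta> j) \<in> Ann n f)"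
  proof -
    have a: "\<forall>j<m. \<theta> j \<in> Rdeg n i" using R by blast
    have b: "\<forall>c::nat \<Rightarrow> 'a. (\<Sum>j<m. mconst (c j) * \<theta> j) \<in> Ann n f \<longrightarrow> (\<forall>j<m. c j = 0)"
    proof (rule allI, rule impI)
      fix c :: "nat \<Rightarrow> 'a" assume "(\<Sum>j<m. mconst (c j) * \<theta> j) \<in> Ann n f"
      then have "(\<Sum>j<m. mconst (c j) * diff_act (\<theta> j) f) = 0"
        unfolding Ann_def by (simp add: diff_act_lincomb)
      then show "\<forall>j<m. c j = 0" using I unfolding fam_indep_def by blast
    qed
    have c: "\<forall>\<psi>\<in>Rdeg n i. \<exists>c::nat \<Rightarrow> 'a. \<psi> - (\<Sum>j<m. mconst (c j) * \<theta> j) \<in> Ann n f"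
    proof
      fix \<psi> :: "'a mpoly" assume \<psi>: "\<psi> \<in> Rdeg n i"
      then obtain c where c: "diff_act \<psi> f = (\<Sum>j<m. mconst (c j) * diff_act (\<theta> j) f)"
        using S[OF \<psi>] span_fam_iff[of _ "\<lambda>j. diff_act (\<theta> j) f" m] by blast
      have "\<psi> - (\<Sum>j<m. mconst (c j) * \<theta> j) \<in> Rdeg n i" using \<psi> R by (intro Rdeg_diff Rdeg_sum) auto
      moreover have "diff_act (\<psi> - (\<Sum>j<m. mconst (c j) * \<theta> j)) f = 0"
        by (simp add: diff_act_diff_left diff_act_lincomb c)
      ultimately show "\<exists>c. \<psi> - (\<Sum>j<m. mconst (c j) * \<theta> j) \<in> Ann n f" using Rdeg_Ann by blast
    qed
    show ?thesis using a b c by blast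
  qed
next
  fix m' assume "\<exists>\<theta>'::nat \<Rightarrow> 'a mpoly. (\<forall>j<m'. \<theta>' j \<in> Rdeg n i) \<and>
      (\<forall>c::nat \<Rightarrow> 'a. (\<Sum>j<m'. mconst (c j) * \<theta>' j) \<in> Ann n f \<longrightarrow> (\<forall>j<m'. c j = 0)) \<and>
      (\<forall>\<psi>\<in>Rdeg n i. \<exists>c::nat \<Rightarrow> 'a. \<psi> - (\<Sum>j<m'. mconst (c j) * \<theta>' j) \<in> Ann n f)"
  then obtain \<theta>' :: "nat \<Rightarrow> 'a mpoly" where R': "\<forall>j<m'. \<theta>' j \<in> Rdeg n i"
    and I': "\<forall>c::nat \<Rightarrow> 'a. (\<Sum>j<m'. mconst (c j) * \<theta>' j) \<in> Ann n f \<longrightarrow> (\<forall>j<m'. c j = 0)"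
    and S': "\<forall>\<psi>\<in>Rdeg n i. \<exists>c::nat \<Rightarrow> 'a. \<psi> - (\<Sum>j<m'. mconst (c j) * \<theta>' j) \<in> Ann n f" by blast
  have I'': "fam_indep (\<lambda>j. diff_act (\<theta>' j) f) m'"
    unfolding fam_indep_def
  proof (rule allI, rule impI)
    fix c :: "nat \<Rightarrow> 'a" assume "(\<Sum>j<m'. mconst (c j) * diff_act (\<theta>' j) f) = 0"
    then have "diff_act (\<Sum>j<m'. mconst (c j) * \<theta>' j) f = 0" by (simp add: diff_act_lincomb)
    moreover have "(\<Sum>j<m'. mconst (c j) * \<theta>' j) \<in> Rdeg n i" using R' by (intro Rdeg_sum) auto
    ultimately show "\<forall>j<m'. c j = 0" using I' Rdeg_Ann by blast
  qed
  have "m' \<le> card ((\<lambda>j. diff_act (\<theta> j) f) ` {..<m})"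
    by (rule fam_steinitz[OF I'']) (use R' S in auto)
  also have "\<dots> \<le> m" using card_image_le[of "{..<m}"] by simp
  finally have 1: "m' \<le> m" .
  have "m \<le> card ((\<lambda>j. diff_act (\<theta>' j) f) ` {..<m'})"
  proof (rule fam_steinitz[OF I])
    fix j assume "j < m"
    then obtain c where "\<theta> j - (\<Sum>j<m'. mconst (c j) * \<theta>' j) \<in> Ann n f" using S' R by blast
    moreover have "\<theta> j - (\<Sum>j<m'. mconst (c j) * \<theta>' j) \<in> Rdeg n i" using R R' \<open>j < m\<close> by (intro Rdeg_diff Rdeg_sum) auto
    ultimately have "diff_act (\<theta> j) f = (\<Sum>j<m'. mconst (c j) * diff_act (\<theta>' j) f)"
      using Rdeg_Ann by (fastforce simp: diff_act_diff_left diff_act_lincomb)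
    then show "diff_act (\<theta> j) f \<in> MV.span ((\<lambda>j. diff_act (\<theta>' j) f) ` {..<m'})"
      using span_fam_iff[of _ "\<lambda>j. diff_act (\<theta>' j) f" m'] by blast
  qed simp
  also have "\<dots> \<le> m'" using card_image_le[of "{..<m'}"] by simp
  finally show "m' = m" using 1 by simp
qed


definition nox :: "nat \<Rightarrow> 'a::comm_ring_1 mpoly \<Rightarrow> bool" where
  "nox j q \<longleftrightarrow> (\<forall>e\<in>Poly_Mapping.keys q. Poly_Mapping.lookup e j = 0)"

lemma homog_nox: "homog_in V k q \<Longrightarrow> j \<notin> V \<Longrightarrow> nox j q"
  unfolding homog_in_def nox_def by (metis in_keys_iff subsetD)

lemma mvar_mult_expand: "mvar k * h = (\<Sum>b\<in>Poly_Mapping.keys h. Poly_Mapping.single (Poly_Mapping.single k 1 + b) (Poly_Mapping.lookup h b))"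
  by (subst (1) poly_expand[of h]) (simp add: sum_distrib_left mvar_def mult_single)

lemma nox_mvar_mult: "k \<noteq> j \<Longrightarrow> nox j h \<Longrightarrow> nox j (mvar k * h)"
proof -
  assume kj: "k \<noteq> j" and h: "nox j h"
  have "Poly_Mapping.keys (mvar k * h) \<subseteq> {a + b |a b. a \<in> Poly_Mapping.keys (mvar k :: 'a mpoly) \<and> b \<in> Poly_Mapping.keys h}"
    by (rule keys_mult)
  moreover have "Poly_Mapping.keys (mvar k :: 'a mpoly) = {Poly_Mapping.single k 1}" by (simp add: mvar_def)
  ultimately show ?thesis using h kj unfolding nox_def by (fastforce simp: lookup_add lookup_single)
qed

lemma diff_mvar_nox: "nox j q \<Longrightarrow> diff_act (mvar j) q = 0"
proof -
  assume h: "nox j q"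
  have "\<not> mono_le (Poly_Mapping.single j 1) b" if "b \<in> Poly_Mapping.keys q" for b
  proof
    assume "mono_le (Poly_Mapping.single j 1) b"
    then have "Poly_Mapping.lookup (Poly_Mapping.single j (1::nat)) j \<le> Poly_Mapping.lookup b j" unfolding mono_le_def by blast
    with h that show False unfolding nox_def by simp
  qed
  then show ?thesis unfolding diff_act_DT mvar_def by (simp add: DT_def)
qed

lemma diff_mvar_mvar: "nox j h \<Longrightarrow> diff_act (mvar j) (mvar j * h) = h"
proof -
  assume h: "nox j h"
  have "diff_act (mvar j) (Poly_Mapping.single (Poly_Mapping.single j 1 + b) x) = Poly_Mapping.single b x"
    if "b \<in> Poly_Mapping.keys h" for b and x :: 'a
  proof -
    have bj: "Poly_Mapping.lookup b j = 0" using h that unfolding nox_def by blast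
    have ml: "mono_le (Poly_Mapping.single j 1) (Poly_Mapping.single j 1 + b)"
      by (simp add: mono_le_def lookup_add)
    have dc: "diff_coeff (Poly_Mapping.single j 1) (Poly_Mapping.single j 1 + b) = 1"
      by (simp add: diff_coeff_def lookup_add bj)
    show ?thesis unfolding mvar_def diff_act_single DT_def using ml dc by simp
  qed
  then have "diff_act (mvar j) (mvar j * h) = (\<Sum>b\<in>Poly_Mapping.keys h. Poly_Mapping.single b (Poly_Mapping.lookup h b))"
    by (simp add: mvar_mult_expand diff_act_sum_right)
  then show ?thesis using poly_expand[of h] by (simp only:)
qed

lemma DT_shift:
  assumes "Poly_Mapping.lookup a k = 0"
  shows "DT a (Poly_Mapping.single k 1 + b) x = mvar k * DT a b x"
proof -
  have ml: "mono_le a (Poly_Mapping.single k 1 + b) \<longleftrightarrow> mono_le a b"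
    unfolding mono_le_def
  proof
    assume h: "\<forall>i. Poly_Mapping.lookup a i \<le> Poly_Mapping.lookup (Poly_Mapping.single k 1 + b) i"
    show "\<forall>i. Poly_Mapping.lookup a i \<le> Poly_Mapping.lookup b i"
    proof
      fix i show "Poly_Mapping.lookup a i \<le> Poly_Mapping.lookup b i"
        using h[rule_format, of i] assms by (cases "i = k") (auto simp: lookup_add lookup_single)
    qed
  next
    assume h: "\<forall>i. Poly_Mapping.lookup a i \<le> Poly_Mapping.lookup b i"
    show "\<forall>i. Poly_Mapping.lookup a i \<le> Poly_Mapping.lookup (Poly_Mapping.single k 1 + b) i"
      using h by (simp add: lookup_add add_increasing)
  qed
  have md: "(Poly_Mapping.single k 1 + b) - a = Poly_Mapping.single k 1 + (b - a)"
    by (rule poly_mapping_eqI) (use assms in \<open>auto simp: lookup_add lookup_minus_nat lookup_single when_def\<close>)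
  have dc: "diff_coeff a (Poly_Mapping.single k 1 + b) = diff_coeff a b"
    unfolding diff_coeff_def
    by (rule prod.cong[OF refl]) (use assms in \<open>auto simp: lookup_add lookup_single when_def in_keys_iff\<close>)
  show ?thesis unfolding DT_def ml md dc by (simp add: mvar_def mult_single)
qed

lemma diff_act_mvar_comm:
  assumes "\<forall>e\<in>Poly_Mapping.keys D. Poly_Mapping.lookup e k = 0"
  shows "diff_act D (mvar k * h) = mvar k * diff_act D h"
proof -
  have s: "diff_act D (Poly_Mapping.single e x) = (\<Sum>a\<in>Poly_Mapping.keys D. DT a e (Poly_Mapping.lookup D a * x))" for e x
    by (subst diff_act_superset[of _ _ "{e}"]) (auto simp: lookup_single)
  have "diff_act D (mvar k * h) = (\<Sum>b\<in>Poly_Mapping.keys h. \<Sum>a\<in>Poly_Mapping.keys D. DT a (Poly_Mapping.single k 1 + b) (Poly_Mapping.lookup D a * Poly_Mapping.lookup h b))"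
    by (simp add: mvar_mult_expand diff_act_sum_right s)
  also have "\<dots> = (\<Sum>b\<in>Poly_Mapping.keys h. \<Sum>a\<in>Poly_Mapping.keys D. mvar k * DT a b (Poly_Mapping.lookup D a * Poly_Mapping.lookup h b))"
    using assms by (intro sum.cong refl DT_shift) auto
  also have "\<dots> = mvar k * diff_act D h"
    by (simp add: diff_act_DT sum_distrib_left sum.swap[of _ "Poly_Mapping.keys h"])
  finally show ?thesis .
qed

lemma diff_act_one: "diff_act 1 q = q"
proof -
  have "diff_act 1 (Poly_Mapping.single b x) = Poly_Mapping.single b x" for b and x :: 'a
  proof -
    have "diff_act (Poly_Mapping.single 0 1) (Poly_Mapping.single b x) = Poly_Mapping.single b x"
      unfolding diff_act_single by (simp add: DT_def mono_le_def diff_coeff_def)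
    then show ?thesis by simp
  qed
  then have "diff_act 1 q = (\<Sum>b\<in>Poly_Mapping.keys q. Poly_Mapping.single b (Poly_Mapping.lookup q b))"
    by (subst (1) poly_expand[of q]) (simp add: diff_act_sum_right)
  then show ?thesis using poly_expand[of q] by (simp only:)
qed


definition Mset :: "nat \<Rightarrow> nat \<Rightarrow> 'a::comm_ring_1 mpoly set" where
  "Mset n k = (\<lambda>a. M n a (k - a)) ` {..k}"

lemma Mset_finite: "finite (Mset n k)" by (simp add: Mset_def)
lemma Mset_card: "card (Mset n k) \<le> k + 1"
  unfolding Mset_def using card_image_le[of "{..k}" "\<lambda>a. M n a (k - a)"] by simp

lemma fsum_span: "fsum n k c \<in> MV.span (Mset n k)"
  unfolding fsum_def Mset_def by (intro MV.span_sum MV.span_scale MV.span_base) auto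

lemma F_span: "homog_in {n+1, n+2} k q \<Longrightarrow> q \<in> MV.span (Mset n k)"
  using form_repr[of n k q] fsum_span by metis

lemma mconst_eq_0_iff: "mconst c = 0 \<longleftrightarrow> c = 0"
  by (metis lookup_single_eq mconst_def mconst_zero)

lemma mconst_mult_eq_0: "mconst c * x = 0 \<Longrightarrow> x \<noteq> 0 \<Longrightarrow> (c::'a::field) = 0"
  by (metis mconst_eq_0_iff mult_eq_0_iff)

lemma mvar_mconst: "mvar l * mconst c = Poly_Mapping.single (Poly_Mapping.single l 1) c"
  by (simp add: mvar_def mconst_def mult_single)

lemma single_one_inj: "Poly_Mapping.single l (1::nat) = Poly_Mapping.single l0 1 \<longleftrightarrow> l = l0"
  by (metis lookup_single_eq lookup_single_not_eq one_neq_zero)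

lemma lookup_mvar_sum:
  assumes "l0 < r"
  shows "Poly_Mapping.lookup (\<Sum>l<r. mvar l * mconst (\<kappa> l)) (Poly_Mapping.single l0 1) = \<kappa> l0"
proof -
  have "Poly_Mapping.lookup (\<Sum>l<r. mvar l * mconst (\<kappa> l)) (Poly_Mapping.single l0 1) = (\<Sum>l<r. if l = l0 then \<kappa> l else 0)"
    unfolding lookup_sum mvar_mconst
    by (rule sum.cong[OF refl]) (auto simp: lookup_single when_def single_one_inj single_one_inj[simplified])
  then show ?thesis using assms by simp
qed

lemma annihilator_exists:
  fixes t :: "nat \<Rightarrow> 'a::field mpoly"
  assumes T: "\<And>l. l < r \<Longrightarrow> homog_in {n+1, n+2} k (t l)" and rk: "r \<le> k"
  shows "\<exists>E. homog_in {n+1, n+2} k E \<and> E \<noteq> 0 \<and> (\<forall>l<r. diff_act E (t l) = 0)"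
proof -
  define v where "v a = (\<Sum>l<r. mvar l * diff_act (M n a (k - a)) (t l))" for a
  have const: "diff_act (M n a (k - a)) (t l) = mconst (Poly_Mapping.lookup (diff_act (M n a (k - a)) (t l)) 0)"
    if "l < r" "a \<le> k" for a l
  proof -
    have "homog_in {n+1, n+2} (k - k) (diff_act (M n a (k - a)) (t l))"
      by (rule homog_diff_act(1)[OF T[OF that(1)]], rule homog_M') (use that in simp)
    then show ?thesis using homog_zero_deg by simp
  qed
  have vspan: "v a \<in> MV.span ((mvar :: nat \<Rightarrow> 'a mpoly) ` {..<r})" if ak: "a \<le> k" for a
    unfolding v_def
  proof (rule MV.span_sum)
    fix l assume l: "l \<in> {..<r}"
    have "mvar l * diff_act (M n a (k - a)) (t l) = mconst (Poly_Mapping.lookup (diff_act (M n a (k - a)) (t l)) 0) * mvar l"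
      using const[of l a] l ak by (simp add: mult.commute)
    also have "\<dots> \<in> MV.span ((mvar :: nat \<Rightarrow> 'a mpoly) ` {..<r})"
      using l by (intro MV.span_scale MV.span_base) auto
    finally show "mvar l * diff_act (M n a (k - a)) (t l) \<in> MV.span ((mvar :: nat \<Rightarrow> 'a mpoly) ` {..<r})" .
  qed
  have "\<not> fam_indep v (k + 1)"
  proof
    assume "fam_indep v (k + 1)"
    then have "k + 1 \<le> card ((mvar :: nat \<Rightarrow> 'a mpoly) ` {..<r})"
      using fam_steinitz[of v "k+1" "(mvar :: nat \<Rightarrow> 'a mpoly) ` {..<r}"] vspan by auto
    also have "\<dots> \<le> r" using card_image_le[of "{..<r}" "mvar :: nat \<Rightarrow> 'a mpoly"] by simp
    finally show False using rk by simp
  qed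
  then obtain c where c0: "(\<Sum>a<k+1. mconst (c a) * v a) = 0" and a0: "\<exists>a<k+1. c a \<noteq> 0"
    unfolding fam_indep_def by blast
  define E where "E = fsum n k c"
  have Eh: "homog_in {n+1, n+2} k E" unfolding E_def by (rule homog_fsum)
  have E0: "E \<noteq> 0" using a0 fsum_zero[of n k c] unfolding E_def by auto
  have Ek: "diff_act E (t l) = (\<Sum>a\<le>k. mconst (c a) * diff_act (M n a (k - a)) (t l))" for l
    unfolding E_def fsum_def by (simp add: diff_act_sum_left diff_act_scale_left)
  define \<kappa> where "\<kappa> l = Poly_Mapping.lookup (diff_act E (t l)) 0" for l
  have Ec: "diff_act E (t l) = mconst (\<kappa> l)" if "l < r" for l
  proof -
    have "homog_in {n+1, n+2} (k - k) (diff_act E (t l))"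
      by (rule homog_diff_act(1)[OF T[OF that] Eh])
    then show ?thesis unfolding \<kappa>_def using homog_zero_deg by simp
  qed
  have "(\<Sum>a<k+1. mconst (c a) * v a) = (\<Sum>a<k+1. \<Sum>l<r. mvar l * (mconst (c a) * diff_act (M n a (k - a)) (t l)))"
    unfolding v_def by (simp only: sum_distrib_left mult.left_commute)
  also have "\<dots> = (\<Sum>l<r. \<Sum>a<k+1. mvar l * (mconst (c a) * diff_act (M n a (k - a)) (t l)))"
    by (rule sum.swap)
  also have "\<dots> = (\<Sum>l<r. mvar l * diff_act E (t l))"
    unfolding Ek by (simp only: sum_distrib_left Suc_eq_plus1[symmetric] lessThan_Suc_atMost)
  also have "\<dots> = (\<Sum>l<r. mvar l * mconst (\<kappa> l))" using Ec by simp
  finally have z: "(\<Sum>l<r. mvar l * mconst (\<kappa> l)) = 0" using c0 by simp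
  have "\<forall>l<r. diff_act E (t l) = 0"
  proof (intro allI impI)
    fix l assume l: "l < r"
    have "\<kappa> l = 0" using lookup_mvar_sum[OF l, of \<kappa>] z by simp
    then show "diff_act E (t l) = 0" using Ec[OF l] by simp
  qed
  then show ?thesis using Eh E0 by blast
qed


locale perazzo =
  fixes n d :: nat and p :: "nat \<Rightarrow> 'a::field_char_0 mpoly" and g f :: "'a mpoly"
  assumes n2: "n > 2"
    and dd: "d = n + 1 \<or> d = n + 2"
    and p_hom: "\<And>i. i \<le> n \<Longrightarrow> homog_in {n+1, n+2} (d - 1) (p i)"
    and p_ind: "\<And>c. (\<Sum>i\<le>n. mconst (c i) * p i) = 0 \<Longrightarrow> \<forall>i\<le>n. c i = 0"
    and g_hom: "homog_in {n+1, n+2} d g"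
    and f_eq: "f = (\<Sum>i\<le>n. mvar i * p i) + g"
begin

lemma d4: "d \<ge> 4" using n2 dd by auto

lemma p_nox: "j \<le> n \<Longrightarrow> i \<le> n \<Longrightarrow> nox j (p i)"
  using homog_nox[OF p_hom] by auto
lemma g_nox: "j \<le> n \<Longrightarrow> nox j g"
  using homog_nox[OF g_hom] by auto

lemma f_y: assumes j: "j \<le> n" shows "diff_act (mvar j) f = p j"
proof -
  have "diff_act (mvar j) (mvar i * p i) = (if i = j then p i else 0)" if "i \<le> n" for i
  proof (cases "i = j")
    case True then show ?thesis using diff_mvar_mvar[OF p_nox[OF j that]] by simp
  next
    case False then show ?thesis using diff_mvar_nox[OF nox_mvar_mult[OF False p_nox[OF j that]]] by simp
  qed
  then have "diff_act (mvar j) (\<Sum>i\<le>n. mvar i * p i) = (\<Sum>i\<le>n. if i = j then p i else 0)"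
    by (simp add: diff_act_sum_right)
  also have "\<dots> = p j" using j by simp
  finally show ?thesis unfolding f_eq diff_act_add_right using diff_mvar_nox[OF g_nox[OF j]] by simp
qed

lemma f_D: assumes D: "homog_in {n+1, n+2} s D"
  shows "diff_act D f = (\<Sum>i\<le>n. mvar i * diff_act D (p i)) + diff_act D g"
proof -
  have "diff_act D (mvar i * p i) = mvar i * diff_act D (p i)" if "i \<le> n" for i
    using homog_nox[OF D, of i] that by (intro diff_act_mvar_comm) (auto simp: nox_def)
  then show ?thesis unfolding f_eq diff_act_add_right by (simp add: diff_act_sum_right)
qed

lemma homog_mvar: "homog_in V 1 (mvar i) \<longleftrightarrow> i \<in> V"
  by (simp add: homog_in_def mvar_def)

lemma f_homog: "homog_in {..n+2} d f"
proof -
  have "homog_in {..n+2} (1 + (d - 1)) (mvar i * p i)" if "i \<le> n" for i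
  proof (rule homog_mult)
    show "homog_in {..n+2} 1 (mvar i)" using that homog_mvar[of "{..n+2}" i] by simp
    show "homog_in {..n+2} (d - 1) (p i)" by (rule homog_mono[OF _ p_hom[OF that]]) auto
  qed
  then have "homog_in {..n+2} d (mvar i * p i)" if "i \<le> n" for i using that d4 by simp
  then show ?thesis unfolding f_eq by (auto intro!: homog_add homog_sum homog_mono[OF _ g_hom])
qed

lemma p_nonzero: assumes "i \<le> n" shows "p i \<noteq> 0"
proof
  assume "p i = 0"
  then have "(\<Sum>j\<le>n. mconst (if j = i then 1 else 0) * p j) = 0"
    by (intro sum.neutral) (auto simp: mconst_one)
  then show False using p_ind[of "\<lambda>j. if j = i then 1 else 0"] assms by auto
qed

lemma f_nonzero: "f \<noteq> 0"
  using f_y[of 0] p_nonzero[of 0] by auto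

lemma f_yD: "j \<le> n \<Longrightarrow> diff_act (mvar j * D) f = diff_act D (p j)"
  by (simp add: mult.commute[of "mvar j"] diff_act_mult f_y)

definition Killp :: "'a mpoly \<Rightarrow> bool" where "Killp D \<longleftrightarrow> (\<forall>j\<le>n. diff_act D (p j) = 0)"

lemma Killp_mult: "Killp D \<Longrightarrow> Killp (E * D)"
  unfolding Killp_def by (simp add: diff_act_mult)

end


lemma kills_span:
  assumes "\<And>x. x \<in> S \<Longrightarrow> diff_act D x = 0" "y \<in> MV.span S"
  shows "diff_act D y = 0"
  using assms(2)
proof (induction rule: MV.span_induct_alt)
  case base then show ?case by simp
next
  case (step c x y)
  then show ?case using assms(1) by (simp add: diff_act_add_right diff_act_scale_right)
qed

lemma of_nat_fact_ne0: "(of_nat (fact a * fact b) :: 'a::field_char_0) \<noteq> 0"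
  by (simp del: of_nat_mult)

lemma pairing_zero:
  fixes D :: "'a::field_char_0 mpoly"
  assumes D: "homog_in {n+1, n+2} k D" and z: "\<And>a. a \<le> k \<Longrightarrow> diff_act D (M n a (k - a)) = 0"
  shows "D = 0"
proof -
  have "Poly_Mapping.lookup D (EXP n a (k - a)) = 0" if "a \<le> k" for a
    using z[OF that] pairing[OF D that] of_nat_fact_ne0[of a "k - a", where 'a='a]
    by (simp add: mconst_eq_0_iff)
  then have "fsum n k (\<lambda>a. Poly_Mapping.lookup D (EXP n a (k - a))) = fsum n k (\<lambda>_. 0)"
    unfolding fsum_def by (intro sum.cong) auto
  then show ?thesis using form_repr[OF D] by (simp add: fsum_def)
qed

lemma annihilator_set:
  fixes B :: "'a::field mpoly set"
  assumes fin: "finite B" and BF: "\<And>b. b \<in> B \<Longrightarrow> homog_in {n+1, n+2} k b"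
    and m: "homog_in {n+1, n+2} k m" and nm: "m \<notin> MV.span B"
  shows "\<exists>E. homog_in {n+1, n+2} k E \<and> E \<noteq> 0 \<and> (\<forall>b\<in>B. diff_act E b = 0)"
proof -
  obtain T where T: "T \<subseteq> B" "MV.independent T" "B \<subseteq> MV.span T" "card T = MV.dim B"
    by (rule MV.basis_exists)
  have finT: "finite T" using finite_subset[OF T(1) fin] .
  have "MV.span T \<subseteq> MV.span B" using MV.span_mono[OF T(1)] .
  then have mT: "m \<notin> MV.span T" using nm by blast
  then have mT': "m \<notin> T" using MV.span_base by blast
  have ind: "MV.independent (insert m T)" by (rule MV.independent_insertI[OF mT T(2)])
  have sub: "insert m T \<subseteq> MV.span (Mset n k)" using m T(1) BF F_span[of n k] by blast
  have "card (insert m T) \<le> card (Mset n k :: 'a mpoly set)"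
    using MV.independent_span_bound[OF Mset_finite ind sub] by simp
  then have cT: "card T \<le> k" using Mset_card[of n k, where 'a='a] mT' finT by simp
  obtain t where t: "bij_betw t {0..<card T} T" using ex_bij_betw_nat_finite[OF finT] by blast
  have tT: "t l \<in> T" if "l < card T" for l using t that unfolding bij_betw_def by auto
  obtain E where E: "homog_in {n+1, n+2} k E" "E \<noteq> 0" "\<forall>l<card T. diff_act E (t l) = 0"
    using annihilator_exists[of "card T" n k t] tT T(1) BF cT by blast
  have "diff_act E x = 0" if xT: "x \<in> T" for x
  proof -
    have "x \<in> t ` {0..<card T}" using t xT unfolding bij_betw_def by simp
    then obtain l where "l < card T" "x = t l" by auto
    then show ?thesis using E(3) by simp
  qed
  then have "diff_act E b = 0" if "b \<in> B" for b
    using kills_span[of T E b] T(3) that by blast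
  then show ?thesis using E by blast
qed

context perazzo
begin

abbreviation phi :: "'a mpoly \<Rightarrow> 'a mpoly" where "phi \<theta> \<equiv> diff_act \<theta> f"

lemma Rdeg_mconst_add: "\<theta> \<in> Rdeg n i \<Longrightarrow> \<theta>' \<in> Rdeg n i \<Longrightarrow> mconst c * \<theta> + \<theta>' \<in> Rdeg n i"
  unfolding Rdeg_def by (auto intro: homog_add homog_scale)

lemma span_image_phi:
  assumes "S \<subseteq> phi ` Rdeg n i"
  shows "MV.span S \<subseteq> phi ` Rdeg n i"
proof
  fix y assume "y \<in> MV.span S"
  then show "y \<in> phi ` Rdeg n i"
  proof (induction rule: MV.span_induct_alt)
    case base
    have "(0::'a mpoly) \<in> Rdeg n i" by (simp add: Rdeg_def)
    then show ?case by force
  next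
    case (step c x y)
    then obtain \<theta> \<theta>' where "\<theta> \<in> Rdeg n i" "\<theta>' \<in> Rdeg n i" "x = phi \<theta>" "y = phi \<theta>'" using assms by blast
    then show ?case
      by (intro image_eqI[of _ _ "mconst c * \<theta> + \<theta>'"]) (auto simp: diff_act_add_left diff_act_scale_left intro: Rdeg_mconst_add)
  qed
qed

lemma Killp_span: "Killp D \<Longrightarrow> y \<in> MV.span (p ` {..n}) \<Longrightarrow> diff_act D y = 0"
  unfolding Killp_def by (rule kills_span) auto

lemma mvar_Rdeg: "j \<le> n + 2 \<Longrightarrow> mvar j \<in> Rdeg n 1"
  unfolding Rdeg_def using homog_mvar[of "{..n+2}" j] by simp

end


lemma sum_lt_Suc_cong: "(\<And>j. j \<le> n \<Longrightarrow> F j = G j) \<Longrightarrow> (\<Sum>j<Suc n. F j) = (\<Sum>j\<le>n. G j)"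
  by (simp only: lessThan_Suc_atMost) (rule sum.cong, auto)

lemma mconst_inverse_cancel: "c \<noteq> 0 \<Longrightarrow> mconst (inverse c) * (mconst c * x) = (x::'a::field mpoly)"
  by (simp add: mult.assoc[symmetric] mconst_mult[symmetric] mconst_one)

context perazzo
begin

lemma p_in_F: "d = n + 1 \<Longrightarrow> j \<le> n \<Longrightarrow> homog_in {n+1, n+2} n (p j)"
  using p_hom[of j] by simp

lemma p_span_all:
  assumes d: "d = n + 1" and a: "a \<le> n"
  shows "M n a (n - a) \<in> MV.span (p ` {..n})"
proof (rule ccontr)
  assume nm: "M n a (n - a) \<notin> MV.span (p ` {..n})"
  define w where "w j = (if j \<le> n then p j else M n a (n - a))" for j
  have fi: "fam_indep w (n + 2)"
    unfolding fam_indep_def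
  proof (rule allI, rule impI)
    fix c assume s: "(\<Sum>j<n + 2. mconst (c j) * w j) = 0"
    have sp: "(\<Sum>j<n + 2. mconst (c j) * w j) = (\<Sum>j\<le>n. mconst (c j) * p j) + mconst (c (n+1)) * M n a (n - a)"
    proof -
      have "(\<Sum>j<n + 2. mconst (c j) * w j) = (\<Sum>j<Suc n. mconst (c j) * w j) + mconst (c (n+1)) * w (n+1)"
        by (simp add: numeral_2_eq_2)
      also have "(\<Sum>j<Suc n. mconst (c j) * w j) = (\<Sum>j\<le>n. mconst (c j) * p j)"
        by (rule sum_lt_Suc_cong) (simp add: w_def)
      finally show ?thesis by (simp add: w_def)
    qed
    show "\<forall>j<n + 2. c j = 0"
    proof (cases "c (n+1) = 0")
      case True
      then have "(\<Sum>j\<le>n. mconst (c j) * p j) = 0" using s sp by simp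
      then have "\<forall>j\<le>n. c j = 0" by (rule p_ind)
      then show ?thesis using True by (auto simp: numeral_2_eq_2 less_Suc_eq le_Suc_eq)
    next
      case False
      have "mconst (c (n+1)) * M n a (n - a) = - (\<Sum>j\<le>n. mconst (c j) * p j)"
        using s sp by (simp add: eq_neg_iff_add_eq_0 add.commute)
      then have "M n a (n - a) = mconst (inverse (c (n+1))) * (- (\<Sum>j\<le>n. mconst (c j) * p j))"
        using mconst_inverse_cancel[OF False, of "M n a (n - a)"] by simp
      also have "\<dots> \<in> MV.span (p ` {..n})"
        by (intro MV.span_scale MV.span_neg MV.span_sum MV.span_base) auto
      finally show ?thesis using nm by simp
    qed
  qed
  have "n + 2 \<le> card (Mset n n :: 'a mpoly set)"
  proof (rule fam_steinitz[OF fi Mset_finite])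
    fix j assume "j < n + 2"
    show "w j \<in> MV.span (Mset n n)"
    proof (cases "j \<le> n")
      case True then show ?thesis using F_span[OF p_in_F[OF d True]] by (simp add: w_def)
    next
      case False then show ?thesis using F_span[OF homog_M'[of n a "n - a" n]] a by (simp add: w_def)
    qed
  qed
  then show False using Mset_card[of n n, where 'a='a] by simp
qed

lemma Z1:
  assumes d: "d = n + 1" and D: "homog_in {n+1, n+2} n D" and K: "Killp D"
  shows "D = 0"
  by (rule pairing_zero[OF D]) (rule Killp_span[OF K p_span_all[OF d]])

end


lemma M_nonzero: "M n a b \<noteq> (0::'a::comm_ring_1 mpoly)"
  unfolding M_def by (metis lookup_single_eq one_neq_zero lookup_zero)

lemma coeff_exists:
  assumes D: "homog_in {n+1, n+2} k D" and nz: "D \<noteq> 0"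
  shows "\<exists>a\<le>k. Poly_Mapping.lookup D (EXP n a (k - a)) \<noteq> 0"
proof (rule ccontr)
  assume "\<not> ?thesis"
  then have "fsum n k (\<lambda>a. Poly_Mapping.lookup D (EXP n a (k - a))) = 0"
    unfolding fsum_def by (intro sum.neutral) auto
  then show False using form_repr[OF D] nz by simp
qed

context perazzo
begin

lemma Z2:
  assumes d: "d = n + 2" and D1: "homog_in {n+1, n+2} (n+1) D1" and D2: "homog_in {n+1, n+2} (n+1) D2"
    and K1: "Killp D1" and K2: "Killp D2" and a1: "a1 \<le> n + 1"
    and c1: "Poly_Mapping.lookup D1 (EXP n a1 (n + 1 - a1)) \<noteq> 0"
    and c2: "Poly_Mapping.lookup D2 (EXP n a1 (n + 1 - a1)) = 0" and nz: "D2 \<noteq> 0"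
  shows False
proof -
  obtain a2 where a2: "a2 \<le> n + 1" "Poly_Mapping.lookup D2 (EXP n a2 (n + 1 - a2)) \<noteq> 0"
    using coeff_exists[OF D2 nz] by blast
  define M1 where "M1 = (M n a1 (n + 1 - a1) :: 'a mpoly)"
  define M2 where "M2 = (M n a2 (n + 1 - a2) :: 'a mpoly)"
  define w where "w j = (if j \<le> n then p j else if j = n + 1 then M1 else M2)" for j
  have pair: "diff_act D (M n a (n + 1 - a)) = mconst (Poly_Mapping.lookup D (EXP n a (n + 1 - a)) * of_nat (fact a * fact (n + 1 - a)))"
    if "homog_in {n+1, n+2} (n+1) D" "a \<le> n + 1" for D :: "'a mpoly" and a
    using pairing[OF that] .
  have fi: "fam_indep w (n + 3)"
    unfolding fam_indep_def
  proof (rule allI, rule impI)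
    fix c assume s: "(\<Sum>j<n + 3. mconst (c j) * w j) = 0"
    have sp: "(\<Sum>j<n + 3. mconst (c j) * w j) = (\<Sum>j\<le>n. mconst (c j) * p j) + mconst (c (n+1)) * M1 + mconst (c (n+2)) * M2"
    proof -
      have "(\<Sum>j<n + 3. mconst (c j) * w j) = (\<Sum>j<Suc n. mconst (c j) * w j) + mconst (c (n+1)) * w (n+1) + mconst (c (n+2)) * w (n+2)"
        by (simp add: numeral_3_eq_3)
      also have "(\<Sum>j<Suc n. mconst (c j) * w j) = (\<Sum>j\<le>n. mconst (c j) * p j)"
        by (rule sum_lt_Suc_cong) (simp add: w_def)
      finally show ?thesis by (simp add: w_def)
    qed
    have kill: "diff_act D (\<Sum>j\<le>n. mconst (c j) * p j) = 0" if "Killp D" for D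
      using that unfolding Killp_def by (simp add: diff_act_sum_right diff_act_scale_right)
    have "diff_act D2 (\<Sum>j<n + 3. mconst (c j) * w j) = 0" using s by simp
    then have "mconst (c (n+2)) * mconst (Poly_Mapping.lookup D2 (EXP n a2 (n + 1 - a2)) * of_nat (fact a2 * fact (n + 1 - a2))) = 0"
      unfolding sp diff_act_add_right diff_act_scale_right kill[OF K2] M1_def M2_def
      using pair[OF D2 a1] pair[OF D2 a2(1)] c2 by simp
    then have cn2: "c (n+2) = 0" using a2(2) of_nat_fact_ne0[of a2 "n + 1 - a2", where 'a='a]
      by (simp add: mconst_mult[symmetric] mconst_eq_0_iff)
    have "diff_act D1 (\<Sum>j<n + 3. mconst (c j) * w j) = 0" using s by simp
    then have "mconst (c (n+1)) * mconst (Poly_Mapping.lookup D1 (EXP n a1 (n + 1 - a1)) * of_nat (fact a1 * fact (n + 1 - a1))) = 0"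
      unfolding sp diff_act_add_right diff_act_scale_right kill[OF K1] M1_def M2_def
      using pair[OF D1 a1] cn2 by simp
    then have cn1: "c (n+1) = 0" using c1 of_nat_fact_ne0[of a1 "n + 1 - a1", where 'a='a]
      by (simp add: mconst_mult[symmetric] mconst_eq_0_iff)
    have "(\<Sum>j\<le>n. mconst (c j) * p j) = 0" using s sp cn1 cn2 by simp
    then have "\<forall>j\<le>n. c j = 0" by (rule p_ind)
    then show "\<forall>j<n + 3. c j = 0" using cn1 cn2 by (auto simp: numeral_3_eq_3 less_Suc_eq le_Suc_eq)
  qed
  have "n + 3 \<le> card (Mset n (n+1) :: 'a mpoly set)"
  proof (rule fam_steinitz[OF fi Mset_finite])
    fix j assume "j < n + 3"
    have pj: "homog_in {n+1, n+2} (n+1) (p j)" if "j \<le> n" using p_hom[OF that] d by simp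
    show "w j \<in> MV.span (Mset n (n+1))"
      unfolding w_def M1_def M2_def
      using F_span[OF pj] F_span[OF homog_M'[of "n+1" a1 "n + 1 - a1" n]] F_span[OF homog_M'[of "n+1" a2 "n + 1 - a2" n]] a1 a2(1)
      by auto
  qed
  then show False using Mset_card[of n "n+1", where 'a='a] by simp
qed

lemma D0_ex:
  assumes d: "d = n + 2"
  shows "\<exists>D0. homog_in {n+1, n+2} (n+1) D0 \<and> D0 \<noteq> 0 \<and> Killp D0"
proof -
  have "\<exists>E. homog_in {n+1, n+2} (n+1) E \<and> E \<noteq> 0 \<and> (\<forall>l<n+1. diff_act E (p l) = 0)"
    by (rule annihilator_exists) (use p_hom d in auto)
  then show ?thesis unfolding Killp_def by (auto simp: less_Suc_eq_le)
qed

lemma Z3: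
  assumes D: "homog_in {n+1, n+2} i D" and i: "i + 2 \<le> d"
    and K1: "Killp (D * M n (d - 1 - i) 0)" and K2: "Killp (D * M n 0 (d - 1 - i))"
  shows "D = 0"
proof (cases "d = n + 1")
  case True
  have "homog_in {n+1, n+2} (i + (d - 1 - i)) (D * M n (d - 1 - i) 0)"
    by (rule homog_mult[OF D homog_M'[of "d - 1 - i"]]) simp
  then have "homog_in {n+1, n+2} n (D * M n (d - 1 - i) 0)" using True i by simp
  then have "D * M n (d - 1 - i) 0 = 0" using Z1[OF True _ K1] by simp
  then show ?thesis using M_nonzero[of n "d - 1 - i" 0, where 'a='a] by (metis mult_eq_0_iff)
next
  case False
  then have d: "d = n + 2" using dd by simp
  show ?thesis
  proof (rule ccontr)
    assume nz: "D \<noteq> 0"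
    define s where "s = d - 1 - i"
    have s1: "s \<ge> 1" "i + s = n + 1" using i d by (auto simp: s_def)
    define A where "A = {a. a \<le> i \<and> Poly_Mapping.lookup D (EXP n a (i - a)) \<noteq> 0}"
    have finA: "finite A" unfolding A_def by simp
    have neA: "A \<noteq> {}" using coeff_exists[OF D nz] unfolding A_def by blast
    define a1 where "a1 = Max A"
    have a1A: "a1 \<in> A" using Max_in[OF finA neA] unfolding a1_def .
    then have a1: "a1 \<le> i" "Poly_Mapping.lookup D (EXP n a1 (i - a1)) \<noteq> 0" unfolding A_def by auto
    have maxA: "a \<le> a1" if "a \<in> A" for a using Max_ge[OF finA that] unfolding a1_def .
    define D1 where "D1 = D * M n s 0"
    define D2 where "D2 = D * M n 0 s"
    have hD1: "homog_in {n+1, n+2} (n+1) D1"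
      unfolding D1_def using homog_mult[OF D homog_M'[of s s 0 n]] s1 by simp
    have hD2: "homog_in {n+1, n+2} (n+1) D2"
      unfolding D2_def using homog_mult[OF D homog_M'[of s 0 s n]] s1 by simp
    have e1: "n + 1 - (a1 + s) = i - a1" using s1 a1 by simp
    have l1: "Poly_Mapping.lookup D1 (EXP n (a1 + s) (n + 1 - (a1 + s))) \<noteq> 0"
    proof -
      have "Poly_Mapping.lookup D1 (EXP n (a1 + s) (i - a1)) = Poly_Mapping.lookup D (EXP n a1 (i - a1))"
        unfolding D1_def M_def lookup_mult_single by (simp add: mono_le_EXP EXP_minus)
      then show ?thesis using a1 e1 by simp
    qed
    have l2: "Poly_Mapping.lookup D2 (EXP n (a1 + s) (n + 1 - (a1 + s))) = 0"
    proof (cases "s \<le> i - a1")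
      case True
      have "a1 + s \<notin> A" using maxA s1 by fastforce
      moreover have "a1 + s \<le> i" using True a1 by simp
      ultimately have z: "Poly_Mapping.lookup D (EXP n (a1 + s) (i - (a1 + s))) = 0" unfolding A_def by simp
      have "Poly_Mapping.lookup D2 (EXP n (a1 + s) (i - a1)) = Poly_Mapping.lookup D (EXP n (a1 + s) (i - a1 - s))"
        unfolding D2_def M_def lookup_mult_single using True by (simp add: mono_le_EXP EXP_minus)
      then show ?thesis using z e1 by (simp add: diff_diff_add)
    next
      case False
      then show ?thesis unfolding D2_def M_def lookup_mult_single using e1 by (simp add: mono_le_EXP)
    qed
    have nz2: "D2 \<noteq> 0" unfolding D2_def using nz M_nonzero[of n 0 s] by simp
    have K1': "Killp D1" using K1 unfolding D1_def s_def .
    have K2': "Killp D2" using K2 unfolding D2_def s_def .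
    show False by (rule Z2[OF d hD1 hD2 K1' K2' _ l1 l2 nz2]) (use a1 s1 in simp)
  qed
qed

lemma INJ:
  assumes D: "homog_in {n+1, n+2} i D" and i: "i + 2 \<le> d" and K: "Killp D"
  shows "D = 0"
proof -
  have "Killp (D * M n (d - 1 - i) 0)" "Killp (D * M n 0 (d - 1 - i))"
    using Killp_mult[OF K, of "M n (d - 1 - i) 0"] Killp_mult[OF K, of "M n 0 (d - 1 - i)"] by (simp_all add: mult.commute)
  then show ?thesis using Z3[OF D i] by simp
qed

end


lemma sum_lessThan_add: "(\<Sum>j<m1 + m2. F j) = (\<Sum>j<m1. F j) + (\<Sum>j<m2. F (m1 + (j::nat)))"
  by (induction m2) (simp_all add: add.assoc)

lemma fam_indep_join:
  assumes "\<And>c c'. (\<Sum>j<m1. mconst (c j) * u j) + (\<Sum>j<m2. mconst (c' j) * v j) = 0 \<Longrightarrow> (\<forall>j<m1. c j = 0) \<and> (\<forall>j<m2. c' j = 0)"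
  shows "fam_indep (\<lambda>j. if j < m1 then u j else v (j - m1)) (m1 + m2)"
  unfolding fam_indep_def
proof (rule allI, rule impI)
  fix c assume s: "(\<Sum>j<m1 + m2. mconst (c j) * (if j < m1 then u j else v (j - m1))) = 0"
  have "(\<Sum>j<m1 + m2. mconst (c j) * (if j < m1 then u j else v (j - m1)))
      = (\<Sum>j<m1. mconst (c j) * u j) + (\<Sum>j<m2. mconst (c (m1 + j)) * v j)"
    by (simp add: sum_lessThan_add)
  with s have "(\<Sum>j<m1. mconst (c j) * u j) + (\<Sum>j<m2. mconst (c (m1 + j)) * v j) = 0" by simp
  then have "(\<forall>j<m1. c j = 0) \<and> (\<forall>j<m2. c (m1 + j) = 0)" by (rule assms)
  then show "\<forall>j<m1 + m2. c j = 0"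
    by (metis add_diff_inverse_nat nat_add_left_cancel_less)
qed

lemma join_image: "(\<lambda>j. if j < (m1::nat) then u j else v (j - m1)) ` {..<m1 + m2} = u ` {..<m1} \<union> v ` {..<m2}"
proof (intro equalityI subsetI)
  fix x assume "x \<in> (\<lambda>j. if j < m1 then u j else v (j - m1)) ` {..<m1 + m2}"
  then obtain j where "j < m1 + m2" "x = (if j < m1 then u j else v (j - m1))" by blast
  then show "x \<in> u ` {..<m1} \<union> v ` {..<m2}"
  proof (cases "j < m1")
    case False
    then have "j - m1 < m2" "x = v (j - m1)" using \<open>j < m1 + m2\<close> \<open>x = _\<close> by auto
    then show ?thesis by blast
  qed auto
next
  fix x assume "x \<in> u ` {..<m1} \<union> v ` {..<m2}"
  then show "x \<in> (\<lambda>j. if j < m1 then u j else v (j - m1)) ` {..<m1 + m2}"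
  proof
    assume "x \<in> u ` {..<m1}"
    then obtain j where "j < m1" "x = u j" by auto
    then show ?thesis by (intro image_eqI[of _ _ j]) auto
  next
    assume "x \<in> v ` {..<m2}"
    then obtain j where "j < m2" "x = v j" by auto
    then show ?thesis by (intro image_eqI[of _ _ "m1 + j"]) auto
  qed
qed

lemma split_var:
  fixes e :: "nat \<Rightarrow>\<^sub>0 nat"
  assumes "Poly_Mapping.lookup e j \<noteq> 0"
  shows "e = Poly_Mapping.single j 1 + (e - Poly_Mapping.single j 1)"
  by (rule poly_mapping_eqI) (use assms in \<open>auto simp: lookup_add lookup_minus_nat lookup_single when_def\<close>)

lemma keys_split_var: "Poly_Mapping.keys (e - Poly_Mapping.single j 1) \<subseteq> Poly_Mapping.keys (e::nat \<Rightarrow>\<^sub>0 nat)"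
  by (rule keys_diff_nat)

lemma keys_uv:
  fixes n :: nat
  assumes "Poly_Mapping.keys e \<subseteq> {..n+2}" "\<forall>j\<le>n. Poly_Mapping.lookup e j = 0"
  shows "Poly_Mapping.keys e \<subseteq> {n+1, n+2}"
proof
  fix t assume t: "t \<in> Poly_Mapping.keys e"
  then have "t \<le> n + 2" "\<not> t \<le> n" using assms by (auto simp: in_keys_iff)
  then show "t \<in> {n+1, n+2}" by auto
qed

context perazzo
begin

lemma phi_mono_cases:
  assumes ke: "Poly_Mapping.keys e \<subseteq> {..n+2}" and de: "mono_deg e = i"
  shows "(\<exists>a\<le>i. Poly_Mapping.single e x = mconst x * M n a (i - a))
       \<or> (\<exists>j\<le>n. \<exists>b. 1 \<le> i \<and> b \<le> i - 1 \<and> phi (Poly_Mapping.single e x) = mconst x * diff_act (M n b (i - 1 - b)) (p j))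
       \<or> phi (Poly_Mapping.single e x) = 0"
proof (cases "\<forall>j\<le>n. Poly_Mapping.lookup e j = 0")
  case True
  then have "Poly_Mapping.keys e \<subseteq> {n+1, n+2}" using keys_uv[OF ke] by blast
  then have e: "e = EXP n (Poly_Mapping.lookup e (n+1)) (Poly_Mapping.lookup e (n+2))" by (rule EXP_of)
  then have s: "Poly_Mapping.lookup e (n+1) + Poly_Mapping.lookup e (n+2) = i" using de mono_deg_EXP by metis
  have "Poly_Mapping.single e x = mconst x * M n (Poly_Mapping.lookup e (n+1)) (i - Poly_Mapping.lookup e (n+1))"
    unfolding M_def mconst_mult_single using e s by (metis add_diff_cancel_left' mult.right_neutral)
  then show ?thesis using s by (metis le_add1)
next
  case False
  then obtain j where j: "j \<le> n" "Poly_Mapping.lookup e j \<noteq> 0" by blast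
  define e1 where "e1 = e - Poly_Mapping.single j 1"
  have e: "e = Poly_Mapping.single j 1 + e1" unfolding e1_def by (rule split_var[OF j(2)])
  have ke1: "Poly_Mapping.keys e1 \<subseteq> {..n+2}" using keys_split_var[of e j] ke unfolding e1_def by blast
  have de1: "mono_deg e1 = i - 1" "1 \<le> i" using de e by (simp_all add: mono_deg_add)
  have se: "Poly_Mapping.single e x = mvar j * Poly_Mapping.single e1 x"
    by (subst e) (simp add: mvar_def mult_single)
  show ?thesis
  proof (cases "\<forall>k\<le>n. Poly_Mapping.lookup e1 k = 0")
    case True
    then have "Poly_Mapping.keys e1 \<subseteq> {n+1, n+2}" using keys_uv[OF ke1] by blast
    then have e1: "e1 = EXP n (Poly_Mapping.lookup e1 (n+1)) (Poly_Mapping.lookup e1 (n+2))" by (rule EXP_of)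
    then have s: "Poly_Mapping.lookup e1 (n+1) + Poly_Mapping.lookup e1 (n+2) = i - 1" using de1 mono_deg_EXP by metis
    define b where "b = Poly_Mapping.lookup e1 (n+1)"
    have "Poly_Mapping.single e1 x = mconst x * M n b (i - 1 - b)"
      unfolding M_def mconst_mult_single b_def using e1 s by (metis add_diff_cancel_left' mult.right_neutral)
    then have "phi (Poly_Mapping.single e x) = mconst x * diff_act (M n b (i - 1 - b)) (p j)"
      unfolding se using f_yD[OF j(1)] by (simp add: diff_act_scale_left)
    moreover have "b \<le> i - 1" using s b_def by simp
    ultimately show ?thesis using j(1) de1(2) by blast
  next
    case False
    then obtain k where k: "k \<le> n" "Poly_Mapping.lookup e1 k \<noteq> 0" by blast
    define e2 where "e2 = e1 - Poly_Mapping.single k 1"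
    have "e1 = Poly_Mapping.single k 1 + e2" unfolding e2_def by (rule split_var[OF k(2)])
    then have "Poly_Mapping.single e1 x = Poly_Mapping.single e2 x * mvar k"
      by (simp add: mvar_def mult_single add.commute)
    then have "phi (Poly_Mapping.single e x) = diff_act (Poly_Mapping.single e2 x * mvar k) (p j)"
      unfolding se using f_yD[OF j(1), of "Poly_Mapping.single e1 x"] by simp
    also have "\<dots> = diff_act (Poly_Mapping.single e2 x) (diff_act (mvar k) (p j))" by (rule diff_act_mult)
    finally have "phi (Poly_Mapping.single e x) = diff_act (Poly_Mapping.single e2 x) (diff_act (mvar k) (p j))" .
    also have "\<dots> = 0" using diff_mvar_nox[OF p_nox[OF k(1) j(1)]] by simp
    finally show ?thesis by blast
  qed
qed

lemma phi_span:
  assumes hA: "\<And>a. a \<le> i \<Longrightarrow> phi (M n a (i - a)) \<in> MV.span S"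
    and hB: "\<And>j b. j \<le> n \<Longrightarrow> 1 \<le> i \<Longrightarrow> b \<le> i - 1 \<Longrightarrow> diff_act (M n b (i - 1 - b)) (p j) \<in> MV.span S"
    and \<psi>: "\<psi> \<in> Rdeg n i"
  shows "phi \<psi> \<in> MV.span S"
proof -
  have "phi \<psi> = (\<Sum>e\<in>Poly_Mapping.keys \<psi>. phi (Poly_Mapping.single e (Poly_Mapping.lookup \<psi> e)))"
    by (subst poly_expand[of \<psi>]) (simp add: diff_act_sum_left)
  also have "\<dots> \<in> MV.span S"
  proof (rule MV.span_sum)
    fix e assume e: "e \<in> Poly_Mapping.keys \<psi>"
    then have ke: "Poly_Mapping.keys e \<subseteq> {..n+2}" "mono_deg e = i" using \<psi> unfolding Rdeg_def homog_in_def by auto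
    from phi_mono_cases[OF ke, of "Poly_Mapping.lookup \<psi> e"]
    show "phi (Poly_Mapping.single e (Poly_Mapping.lookup \<psi> e)) \<in> MV.span S"
    proof (elim disjE exE conjE)
      fix a assume "a \<le> i" "Poly_Mapping.single e (Poly_Mapping.lookup \<psi> e) = mconst (Poly_Mapping.lookup \<psi> e) * M n a (i - a)"
      then show ?thesis using hA by (simp add: diff_act_scale_left MV.span_scale)
    next
      fix j b assume "j \<le> n" "1 \<le> i" "b \<le> i - 1" "phi (Poly_Mapping.single e (Poly_Mapping.lookup \<psi> e)) = mconst (Poly_Mapping.lookup \<psi> e) * diff_act (M n b (i - 1 - b)) (p j)"
      then show ?thesis using hB by (simp add: MV.span_scale)
    next
      assume "phi (Poly_Mapping.single e (Poly_Mapping.lookup \<psi> e)) = 0"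
      then show ?thesis by (simp add: MV.span_zero)
    qed
  qed
  finally show ?thesis .
qed

end


context perazzo
begin

lemma M_Rdeg: "k = a + b \<Longrightarrow> M n a b \<in> Rdeg n k"
  unfolding Rdeg_def mem_Collect_eq by (rule homog_mono[OF _ homog_M']) auto

lemma mvarM_Rdeg:
  assumes "j \<le> n" "1 \<le> i" "b \<le> i - 1"
  shows "mvar j * M n b (i - 1 - b) \<in> Rdeg n i"
proof -
  have "homog_in {..n+2} (1 + (i - 1)) (mvar j * M n b (i - 1 - b))"
  proof (rule homog_mult)
    show "homog_in {..n+2} 1 (mvar j)" using assms homog_mvar[of "{..n+2}" j] by simp
    show "homog_in {..n+2} (i - 1) (M n b (i - 1 - b))" by (rule homog_mono[OF _ homog_M']) (use assms in auto)
  qed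
  then show ?thesis using assms unfolding Rdeg_def by simp
qed

lemma Mset_image:
  assumes i: "2 \<le> i \<or> (d = n + 1 \<and> i = 1)" and id: "i \<le> d"
  shows "Mset n (d - i) \<subseteq> phi ` Rdeg n i"
proof -
  define B where "B = (\<lambda>(b, j). diff_act (M n b (i - 1 - b)) (p j)) ` ({..i - 1} \<times> {..n})"
  have i1: "1 \<le> i" using i by auto
  have BR: "B \<subseteq> phi ` Rdeg n i"
  proof
    fix x assume "x \<in> B"
    then obtain b j where bj: "b \<le> i - 1" "j \<le> n" "x = diff_act (M n b (i - 1 - b)) (p j)" unfolding B_def by auto
    have "phi (mvar j * M n b (i - 1 - b)) = x" using f_yD[OF bj(2)] bj(3) by simp
    then show "x \<in> phi ` Rdeg n i" using mvarM_Rdeg[OF bj(2) i1 bj(1)] by blast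
  qed
  have BF: "homog_in {n+1, n+2} (d - i) x" if xB: "x \<in> B" for x
  proof -
    obtain b j where bj: "b \<le> i - 1" "j \<le> n" "x = diff_act (M n b (i - 1 - b)) (p j)" using xB unfolding B_def by auto
    have "homog_in {n+1, n+2} ((d - 1) - (i - 1)) x"
      unfolding bj(3) by (rule homog_diff_act(1)[OF p_hom[OF bj(2)] homog_M']) (use bj in simp)
    then show ?thesis using i1 by simp
  qed
  have finB: "finite B" unfolding B_def by simp
  have "(Mset n (d - i) :: 'a mpoly set) \<subseteq> MV.span B"
  proof (cases "2 \<le> i")
    case True
    show ?thesis
    proof
      fix m :: "'a mpoly" assume "m \<in> Mset n (d - i)"
      then obtain a where a: "a \<le> d - i" "m = M n a (d - i - a)" unfolding Mset_def by auto
      show "m \<in> MV.span B"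
      proof (rule ccontr)
        assume nm: "m \<notin> MV.span B"
        have mF: "homog_in {n+1, n+2} (d - i) m" unfolding a(2) by (rule homog_M') (use a(1) in simp)
        obtain E where E: "homog_in {n+1, n+2} (d - i) E" "E \<noteq> 0" "\<forall>b\<in>B. diff_act E b = 0"
          using annihilator_set[OF finB BF mF nm] by blast
        have K: "Killp (E * M n b0 (i - 1 - b0))" if "b0 \<le> i - 1" for b0
          unfolding Killp_def
        proof (intro allI impI)
          fix j assume j: "j \<le> n"
          have "diff_act (M n b0 (i - 1 - b0)) (p j) \<in> B" unfolding B_def using that j by auto
          then show "diff_act (E * M n b0 (i - 1 - b0)) (p j) = 0" using E(3) by (simp add: diff_act_mult)
        qed
        have e: "d - 1 - (d - i) = i - 1" using id i1 by simp
        have "E = 0"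
          by (rule Z3[OF E(1)]) (use True id K[of "i - 1"] K[of 0] e in simp_all)
        then show False using E(2) by simp
      qed
    qed
  next
    case False
    then have d: "d = n + 1" "i = 1" using i by auto
    have "p ` {..n} \<subseteq> B" unfolding B_def using d by (force simp: diff_act_one)
    then have "MV.span (p ` {..n}) \<subseteq> MV.span B" by (rule MV.span_mono)
    moreover have "(Mset n (d - i) :: 'a mpoly set) \<subseteq> MV.span (p ` {..n})"
      unfolding Mset_def using p_span_all[OF d(1)] d by auto
    ultimately show ?thesis by blast
  qed
  then show ?thesis using span_image_phi[OF BR] by blast
qed

lemma F_image:
  assumes i: "2 \<le> i \<or> (d = n + 1 \<and> i = 1)" and id: "i \<le> d" and q: "homog_in {n+1, n+2} (d - i) q"
  shows "q \<in> phi ` Rdeg n i"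
proof -
  have "q \<in> MV.span (Mset n (d - i))" by (rule F_span[OF q])
  also have "\<dots> \<subseteq> MV.span (phi ` Rdeg n i)" by (rule MV.span_mono[OF Mset_image[OF i id]])
  also have "\<dots> \<subseteq> phi ` Rdeg n i" by (rule span_image_phi) simp
  finally show ?thesis .
qed

end


context perazzo
begin

definition isb :: "nat \<Rightarrow> nat \<Rightarrow> (nat \<Rightarrow> 'a mpoly) \<Rightarrow> bool" where
  "isb i m \<theta> \<longleftrightarrow> (\<forall>j<m. \<theta> j \<in> Rdeg n i) \<and> fam_indep (\<lambda>j. phi (\<theta> j)) m
     \<and> (\<forall>\<psi>\<in>Rdeg n i. phi \<psi> \<in> MV.span ((\<lambda>j. phi (\<theta> j)) ` {..<m}))"

lemma isb_hvec: "isb i m \<theta> \<Longrightarrow> hvec n f i = m"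
  unfolding isb_def by (intro hvec_eq) auto

lemma one_Rdeg: "1 \<in> Rdeg n 0"
  unfolding Rdeg_def homog_in_def by (simp add: mono_deg_def)

lemma H0: "isb 0 1 (\<lambda>_. 1)"
  unfolding isb_def
proof (intro conjI ballI allI impI)
  show "j < 1 \<Longrightarrow> 1 \<in> Rdeg n 0" for j :: nat using one_Rdeg by simp
  show "fam_indep (\<lambda>j. phi 1) 1"
    unfolding fam_indep_def diff_act_one using f_nonzero by (auto simp: mconst_eq_0_iff)
  fix \<psi> :: "'a mpoly" assume "\<psi> \<in> Rdeg n 0"
  then have "\<psi> = mconst (Poly_Mapping.lookup \<psi> 0)" using homog_zero_deg unfolding Rdeg_def by auto
  then have "phi \<psi> = mconst (Poly_Mapping.lookup \<psi> 0) * phi 1"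
    by (metis diff_act_scale_left mult.right_neutral)
  moreover have "phi 1 \<in> MV.span ((\<lambda>j::nat. phi 1) ` {..<1})" by (rule MV.span_base) (rule image_eqI[of _ _ 0], auto)
  ultimately show "phi \<psi> \<in> MV.span ((\<lambda>j::nat. phi 1) ` {..<1})" by (simp add: MV.span_scale)
qed

lemma Hbig: "d < i \<Longrightarrow> isb i 0 \<theta>"
  unfolding isb_def fam_indep_def
proof (intro conjI ballI allI impI)
  fix \<psi> :: "'a mpoly" assume "d < i" "\<psi> \<in> Rdeg n i"
  then have "phi \<psi> = 0" using homog_diff_act(2)[OF f_homog, of "{..n+2}" i \<psi>] unfolding Rdeg_def by auto
  then show "phi \<psi> \<in> MV.span ((\<lambda>j. phi (\<theta> j)) ` {..<0})" by (simp add: MV.span_zero)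
qed auto

lemma Hd: "\<exists>\<theta>. isb d 1 \<theta>"
proof -
  have "M n 0 0 \<in> (Mset n (d - d) :: 'a mpoly set)" unfolding Mset_def by auto
  moreover have "(Mset n (d - d) :: 'a mpoly set) \<subseteq> phi ` Rdeg n d" by (rule Mset_image) (use d4 in auto)
  ultimately have "(1::'a mpoly) \<in> phi ` Rdeg n d" by auto
  then obtain \<theta>0 where t0: "\<theta>0 \<in> Rdeg n d" "phi \<theta>0 = 1" by (metis imageE)
  have "isb d 1 (\<lambda>_. \<theta>0)"
    unfolding isb_def
  proof (intro conjI ballI allI impI)
    show "j < 1 \<Longrightarrow> \<theta>0 \<in> Rdeg n d" for j :: nat using t0 by simp
    show "fam_indep (\<lambda>j. phi \<theta>0) 1"
      unfolding fam_indep_def t0 by (auto simp: mconst_eq_0_iff)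
    fix \<psi> :: "'a mpoly" assume "\<psi> \<in> Rdeg n d"
    then have "homog_in {..n+2} (d - d) (phi \<psi>)" using homog_diff_act(1)[OF f_homog] unfolding Rdeg_def by blast
    then have "phi \<psi> = mconst (Poly_Mapping.lookup (phi \<psi>) 0) * 1" using homog_zero_deg by simp
    moreover have "phi \<theta>0 \<in> MV.span ((\<lambda>j::nat. phi \<theta>0) ` {..<1})" by (rule MV.span_base) (rule image_eqI[of _ _ 0], auto)
    ultimately show "phi \<psi> \<in> MV.span ((\<lambda>j::nat. phi \<theta>0) ` {..<1})" using t0(2) by (metis MV.span_scale)
  qed
  then show ?thesis by blast
qed

end


context perazzo
begin

lemma fsum_phi: "(\<Sum>j<Suc k. mconst (c j) * phi (M n j (k - j))) = phi (fsum n k c)"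
  unfolding fsum_def lessThan_Suc_atMost by (simp add: diff_act_sum_left diff_act_scale_left)

lemma mvar_phi: "l \<le> n \<Longrightarrow> diff_act (mvar l) (phi D) = diff_act D (p l)"
  using f_yD[of l D] by (simp add: diff_act_mult)

lemma mvar_fsum: "l \<le> n \<Longrightarrow> diff_act (mvar l) (fsum n k c) = 0"
  by (rule diff_mvar_nox[OF homog_nox[OF homog_fsum]]) auto

lemma Hmid:
  assumes i1: "1 \<le> i" and id: "i < d" and inj: "i + 2 \<le> d \<or> d = n + 1" and full: "2 \<le> i \<or> d = n + 1"
  shows "\<exists>\<theta>. isb i (d + 2) \<theta>"
proof -
  define k where "k = d - i"
  have full': "2 \<le> i \<or> (d = n + 1 \<and> i = 1)" using full i1 by auto
  have MI: "(Mset n k :: 'a mpoly set) \<subseteq> phi ` Rdeg n i"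
    unfolding k_def by (rule Mset_image[OF full' less_imp_le[OF id]])
  have "\<forall>a\<in>{..k}. \<exists>\<theta>\<in>Rdeg n i. phi \<theta> = M n a (k - a)"
  proof
    fix a assume "a \<in> {..k}"
    then have "M n a (k - a) \<in> (Mset n k :: 'a mpoly set)" unfolding Mset_def by blast
    then have "M n a (k - a) \<in> phi ` Rdeg n i" using MI by blast
    then show "\<exists>\<theta>\<in>Rdeg n i. phi \<theta> = M n a (k - a)" by (metis imageE)
  qed
  then obtain \<theta>b where \<theta>b: "\<forall>a\<in>{..k}. \<theta>b a \<in> Rdeg n i \<and> phi (\<theta>b a) = M n a (k - a)"
    using bchoice[of "{..k}" "\<lambda>a \<theta>. \<theta> \<in> Rdeg n i \<and> phi \<theta> = M n a (k - a)"] by blast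
  define \<theta> where "\<theta> j = (if j < k + 1 then \<theta>b j else M n (j - (k+1)) (i - (j - (k+1))))" for j
  define u where "u j = phi (\<theta>b j)" for j
  define v where "v a = phi (M n a (i - a))" for a
  have phi\<theta>: "(\<lambda>j. phi (\<theta> j)) = (\<lambda>j. if j < k + 1 then u j else v (j - (k + 1)))"
    by (auto simp: \<theta>_def u_def v_def fun_eq_iff)
  have m: "d + 2 = (k + 1) + (i + 1)" using id by (simp add: k_def)
  have R: "\<forall>j<d+2. \<theta> j \<in> Rdeg n i"
  proof (intro allI impI)
    fix j assume j: "j < d + 2"
    show "\<theta> j \<in> Rdeg n i"
    proof (cases "j < k + 1")
      case True then show ?thesis using \<theta>b by (simp add: \<theta>_def)
    next
      case False then show ?thesis unfolding \<theta>_def using j m by (auto intro!: M_Rdeg)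
    qed
  qed
  have usum: "(\<Sum>j<k+1. mconst (c j) * u j) = fsum n k c" for c
    unfolding fsum_def u_def using \<theta>b by (simp add: lessThan_Suc_atMost)
  have vsum: "(\<Sum>j<i+1. mconst (c j) * v j) = phi (fsum n i c)" for c
    unfolding v_def using fsum_phi by simp
  have I: "fam_indep (\<lambda>j. phi (\<theta> j)) (d+2)"
    unfolding phi\<theta> m
  proof (rule fam_indep_join)
    fix c c' assume s: "(\<Sum>j<k+1. mconst (c j) * u j) + (\<Sum>j<i+1. mconst (c' j) * v j) = 0"
    then have s': "fsum n k c + phi (fsum n i c') = 0" unfolding usum vsum .
    have K: "Killp (fsum n i c')"
      unfolding Killp_def
    proof (intro allI impI)
      fix l assume l: "l \<le> n"
      have "diff_act (mvar l) (fsum n k c + phi (fsum n i c')) = 0" using s' by simp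
      then show "diff_act (fsum n i c') (p l) = 0"
        unfolding diff_act_add_right mvar_fsum[OF l] mvar_phi[OF l] by simp
    qed
    have z': "fsum n i c' = 0"
    proof (cases "i + 2 \<le> d")
      case True then show ?thesis by (rule INJ[OF homog_fsum _ K])
    next
      case False then have "d = n + 1" "i = n" using inj id by auto
      then show ?thesis using Z1[OF _ _ K] homog_fsum by auto
    qed
    have c': "\<forall>j<i+1. c' j = 0" using fsum_zero[OF z'] by auto
    have "fsum n k c = 0" using s' z' by simp
    then have "\<forall>j<k+1. c j = 0" using fsum_zero[of n k c] by (auto simp: less_Suc_eq_le)
    with c' show "(\<forall>j<k+1. c j = 0) \<and> (\<forall>j<i+1. c' j = 0)" by blast
  qed
  have img: "(\<lambda>j. phi (\<theta> j)) ` {..<d+2} = u ` {..<k+1} \<union> v ` {..<i+1}"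
    unfolding phi\<theta> m by (rule join_image)
  have S: "\<forall>\<psi>\<in>Rdeg n i. phi \<psi> \<in> MV.span ((\<lambda>j. phi (\<theta> j)) ` {..<d+2})"
  proof
    fix \<psi> :: "'a mpoly" assume \<psi>: "\<psi> \<in> Rdeg n i"
    show "phi \<psi> \<in> MV.span ((\<lambda>j. phi (\<theta> j)) ` {..<d+2})"
      unfolding img
    proof (rule phi_span[OF _ _ \<psi>])
      fix a assume a: "a \<le> i"
      show "phi (M n a (i - a)) \<in> MV.span (u ` {..<k+1} \<union> v ` {..<i+1})"
        by (rule MV.span_base) (use a in \<open>auto simp: v_def\<close>)
    next
      fix j b assume j: "j \<le> n" and "1 \<le> i" and b: "b \<le> i - 1"
      have "homog_in {n+1, n+2} ((d - 1) - (i - 1)) (diff_act (M n b (i - 1 - b)) (p j))"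
        by (rule homog_diff_act(1)[OF p_hom[OF j] homog_M']) (use b in simp)
      then have "homog_in {n+1, n+2} k (diff_act (M n b (i - 1 - b)) (p j))" using i1 by (simp add: k_def)
      then have "diff_act (M n b (i - 1 - b)) (p j) \<in> MV.span (Mset n k)" by (rule F_span)
      moreover have "(Mset n k :: 'a mpoly set) \<subseteq> u ` {..<k+1} \<union> v ` {..<i+1}"
      proof
        fix x :: "'a mpoly" assume "x \<in> Mset n k"
        then obtain a where "a \<le> k" "x = M n a (k - a)" unfolding Mset_def by auto
        then show "x \<in> u ` {..<k+1} \<union> v ` {..<i+1}" using \<theta>b unfolding u_def by force
      qed
      ultimately show "diff_act (M n b (i - 1 - b)) (p j) \<in> MV.span (u ` {..<k+1} \<union> v ` {..<i+1})"
        using MV.span_mono by blast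
    qed
  qed
  show ?thesis using R I S unfolding isb_def by blast
qed

end


context perazzo
begin

lemma Killp_of_phi:
  assumes "\<And>l. l \<le> n \<Longrightarrow> diff_act (mvar l) (X + phi D) = 0" "\<And>l. l \<le> n \<Longrightarrow> diff_act (mvar l) X = 0"
  shows "Killp D"
  unfolding Killp_def using assms by (simp add: diff_act_add_right mvar_phi)

lemma nox_psum: "l \<le> n \<Longrightarrow> diff_act (mvar l) (\<Sum>j\<le>n. mconst (c j) * p j) = 0"
  by (simp add: diff_act_sum_right diff_act_scale_right diff_mvar_nox[OF p_nox])

lemma H1b:
  assumes d: "d = n + 2"
  shows "\<exists>\<theta>. isb 1 (n + 3) \<theta>"
proof -
  define \<theta> :: "nat \<Rightarrow> 'a mpoly" where "\<theta> j = (if j < n + 1 then mvar j else M n (j - (n+1)) (1 - (j - (n+1))))" for j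
  define u where "u j = phi (mvar j)" for j
  define v where "v a = phi (M n a (1 - a))" for a
  have phi\<theta>: "(\<lambda>j. phi (\<theta> j)) = (\<lambda>j. if j < n + 1 then u j else v (j - (n + 1)))"
    by (auto simp: \<theta>_def u_def v_def fun_eq_iff)
  have m: "n + 3 = (n + 1) + (1 + 1)" by simp
  have R: "\<forall>j<n+3. \<theta> j \<in> Rdeg n 1"
  proof (intro allI impI)
    fix j assume j: "j < n + 3"
    show "\<theta> j \<in> Rdeg n 1"
    proof (cases "j < n + 1")
      case True then show ?thesis using mvar_Rdeg[of j] by (simp add: \<theta>_def)
    next
      case False then show ?thesis unfolding \<theta>_def using j by (auto intro!: M_Rdeg)
    qed
  qed
  have usum: "(\<Sum>j<n+1. mconst (c j) * u j) = (\<Sum>j\<le>n. mconst (c j) * p j)" for c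
    unfolding u_def by (simp only: Suc_eq_plus1[symmetric], rule sum_lt_Suc_cong) (simp add: f_y)
  have vsum: "(\<Sum>j<1+1. mconst (c j) * v j) = phi (fsum n 1 c)" for c
    unfolding v_def using fsum_phi[where k=1 and c=c] by (simp add: numeral_2_eq_2)
  have I: "fam_indep (\<lambda>j. phi (\<theta> j)) (n+3)"
    unfolding phi\<theta> m
  proof (rule fam_indep_join)
    fix c c' assume s: "(\<Sum>j<n+1. mconst (c j) * u j) + (\<Sum>j<1+1. mconst (c' j) * v j) = 0"
    then have s': "(\<Sum>j\<le>n. mconst (c j) * p j) + phi (fsum n 1 c') = 0" unfolding usum vsum .
    have K: "Killp (fsum n 1 c')"
      by (rule Killp_of_phi[of "\<Sum>j\<le>n. mconst (c j) * p j"]) (use s' nox_psum in simp_all)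
    have z': "fsum n 1 c' = 0" by (rule INJ[OF homog_fsum _ K]) (use d n2 in simp)
    have c': "\<forall>j<1+1. c' j = 0" using fsum_zero[of n 1 c'] z' by (auto simp: less_Suc_eq_le)
    have "(\<Sum>j\<le>n. mconst (c j) * p j) = 0" using s' z' by simp
    then have "\<forall>j\<le>n. c j = 0" by (rule p_ind)
    then show "(\<forall>j<n+1. c j = 0) \<and> (\<forall>j<1+1. c' j = 0)" using c' by auto
  qed
  have img: "(\<lambda>j. phi (\<theta> j)) ` {..<n+3} = u ` {..<n+1} \<union> v ` {..<1+1}"
    unfolding phi\<theta> m by (rule join_image)
  have S: "\<forall>\<psi>\<in>Rdeg n 1. phi \<psi> \<in> MV.span ((\<lambda>j. phi (\<theta> j)) ` {..<n+3})"
  proof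
    fix \<psi> :: "'a mpoly" assume \<psi>: "\<psi> \<in> Rdeg n 1"
    show "phi \<psi> \<in> MV.span ((\<lambda>j. phi (\<theta> j)) ` {..<n+3})"
      unfolding img
    proof (rule phi_span[OF _ _ \<psi>])
      fix a :: nat assume a: "a \<le> 1"
      show "phi (M n a (1 - a)) \<in> MV.span (u ` {..<n+1} \<union> v ` {..<1+1})"
        by (rule MV.span_base) (use a in \<open>auto simp: v_def\<close>)
    next
      fix j b :: nat assume j: "j \<le> n" and b: "b \<le> 1 - 1"
      have "diff_act (M n b (1 - 1 - b)) (p j) = u j" using b f_y[OF j] by (simp add: u_def diff_act_one)
      then show "diff_act (M n b (1 - 1 - b)) (p j) \<in> MV.span (u ` {..<n+1} \<union> v ` {..<1+1})"
        using j by (intro MV.span_base) auto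
    qed
  qed
  show ?thesis using R I S unfolding isb_def by blast
qed

end


context perazzo
begin

lemma lookup_Msum:
  fixes \<sigma> :: "nat \<Rightarrow> nat"
  assumes inj: "inj_on \<sigma> {..<r}" and j0: "j0 < r"
  shows "Poly_Mapping.lookup (\<Sum>j<r. mconst (c j) * M n (\<sigma> j) (K - \<sigma> j)) (EXP n (\<sigma> j0) (K - \<sigma> j0)) = c j0"
proof -
  have "Poly_Mapping.lookup (\<Sum>j<r. mconst (c j) * M n (\<sigma> j) (K - \<sigma> j)) (EXP n (\<sigma> j0) (K - \<sigma> j0))
      = (\<Sum>j<r. if j = j0 then c j else 0)"
    unfolding lookup_sum M_def mconst_mult_single
    by (rule sum.cong[OF refl]) (use inj j0 in \<open>auto simp: lookup_single when_def dest: inj_onD\<close>)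
  then show ?thesis using j0 by simp
qed

lemma lookup_Msum0:
  fixes \<sigma> :: "nat \<Rightarrow> nat"
  assumes "\<forall>j<r. \<sigma> j \<noteq> a"
  shows "Poly_Mapping.lookup (\<Sum>j<r. mconst (c j) * M n (\<sigma> j) (K - \<sigma> j)) (EXP n a (K - a)) = 0"
  unfolding lookup_sum M_def mconst_mult_single
  by (rule sum.neutral) (use assms in \<open>auto simp: lookup_single when_def\<close>)

lemma Hd1b:
  assumes d: "d = n + 2"
  shows "\<exists>\<theta>. isb (n + 1) (n + 3) \<theta>"
proof -
  obtain D0 where D0: "homog_in {n+1, n+2} (n+1) D0" "D0 \<noteq> 0" "Killp D0" using D0_ex[OF d] by blast
  obtain a0 where a0: "a0 \<le> n + 1" "Poly_Mapping.lookup D0 (EXP n a0 (n + 1 - a0)) \<noteq> 0"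
    using coeff_exists[OF D0(1,2)] by blast
  have MI: "(Mset n 1 :: 'a mpoly set) \<subseteq> phi ` Rdeg n (n+1)"
    using Mset_image[of "n+1"] d n2 by simp
  have "\<forall>a\<in>{..1::nat}. \<exists>\<theta>\<in>Rdeg n (n+1). phi \<theta> = M n a (1 - a)"
  proof
    fix a :: nat assume "a \<in> {..1}"
    then have "M n a (1 - a) \<in> (Mset n 1 :: 'a mpoly set)" unfolding Mset_def by blast
    then have "M n a (1 - a) \<in> phi ` Rdeg n (n+1)" using MI by blast
    then show "\<exists>\<theta>\<in>Rdeg n (n+1). phi \<theta> = M n a (1 - a)" by (metis imageE)
  qed
  then obtain \<theta>b where \<theta>b: "\<forall>a\<in>{..1::nat}. \<theta>b a \<in> Rdeg n (n+1) \<and> phi (\<theta>b a) = M n a (1 - a)"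
    using bchoice[of "{..1::nat}" "\<lambda>a \<theta>. \<theta> \<in> Rdeg n (n+1) \<and> phi \<theta> = M n a (1 - a)"] by blast
  define \<sigma> where "\<sigma> j = (if j < a0 then j else j + 1)" for j
  have \<sigma>inj: "inj_on \<sigma> {..<n+1}" unfolding \<sigma>_def by (rule inj_onI) (auto split: if_splits)
  have \<sigma>ne: "\<sigma> j \<noteq> a0" for j unfolding \<sigma>_def by auto
  have \<sigma>le: "\<sigma> j \<le> n + 1" if "j < n + 1" for j using that a0 unfolding \<sigma>_def by auto
  define \<theta> :: "nat \<Rightarrow> 'a mpoly" where "\<theta> j = (if j < 1 + 1 then \<theta>b j else M n (\<sigma> (j - (1 + 1))) (n + 1 - \<sigma> (j - (1 + 1))))" for j
  define u where "u j = phi (\<theta>b j)" for j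
  define v where "v j = phi (M n (\<sigma> j) (n + 1 - \<sigma> j))" for j
  have phi\<theta>: "(\<lambda>j. phi (\<theta> j)) = (\<lambda>j. if j < 1 + 1 then u j else v (j - (1 + 1)))"
    by (auto simp: \<theta>_def u_def v_def fun_eq_iff)
  have m: "n + 3 = (1 + 1) + (n + 1)" by simp
  have R: "\<forall>j<n+3. \<theta> j \<in> Rdeg n (n+1)"
  proof (intro allI impI)
    fix j assume j: "j < n + 3"
    show "\<theta> j \<in> Rdeg n (n+1)"
    proof (cases "j < 1 + 1")
      case True then show ?thesis using \<theta>b by (simp add: \<theta>_def)
    next
      case False
      then have "\<sigma> (j - (1 + 1)) \<le> n + 1" using \<sigma>le[of "j - (1 + 1)"] j by simp
      then show ?thesis unfolding \<theta>_def using False by (auto intro!: M_Rdeg)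
    qed
  qed
  have usum: "(\<Sum>j<1+1. mconst (c j) * u j) = fsum n 1 c" for c
    unfolding fsum_def u_def using \<theta>b by (simp add: numeral_2_eq_2 lessThan_Suc_atMost[symmetric])
  define Dc :: "(nat \<Rightarrow> 'a) \<Rightarrow> 'a mpoly" where "Dc c' = (\<Sum>j<n+1. mconst (c' j) * M n (\<sigma> j) (n + 1 - \<sigma> j))" for c'
  have vsum: "(\<Sum>j<n+1. mconst (c' j) * v j) = phi (Dc c')" for c'
    unfolding v_def Dc_def diff_act_lincomb ..
  have hDc: "homog_in {n+1, n+2} (n+1) (Dc c')" for c'
    unfolding Dc_def by (intro homog_sum homog_scale homog_M') (use \<sigma>le in auto)
  have I: "fam_indep (\<lambda>j. phi (\<theta> j)) (n+3)"
    unfolding phi\<theta> m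
  proof (rule fam_indep_join)
    fix c c' assume s: "(\<Sum>j<1+1. mconst (c j) * u j) + (\<Sum>j<n+1. mconst (c' j) * v j) = 0"
    then have s': "fsum n 1 c + phi (Dc c') = 0" unfolding usum vsum .
    have K: "Killp (Dc c')"
      by (rule Killp_of_phi[of "fsum n 1 c"]) (use s' mvar_fsum in simp_all)
    have z: "Dc c' = 0"
    proof (rule ccontr)
      assume "Dc c' \<noteq> 0"
      then show False
        using Z2[OF d D0(1) hDc D0(3) K a0] lookup_Msum0[of "n+1" \<sigma> a0 c' "n+1"] \<sigma>ne
        unfolding Dc_def by blast
    qed
    have c': "\<forall>j<n+1. c' j = 0"
    proof (intro allI impI)
      fix j assume j: "j < n + 1"
      show "c' j = 0" using lookup_Msum[OF \<sigma>inj j, of c' "n+1"] z unfolding Dc_def by simp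
    qed
    have "fsum n 1 c = 0" using s' z by simp
    then have "\<forall>j<1+1. c j = 0" using fsum_zero[of n 1 c] by (auto simp: less_Suc_eq_le)
    with c' show "(\<forall>j<1+1. c j = 0) \<and> (\<forall>j<n+1. c' j = 0)" by blast
  qed
  have img: "(\<lambda>j. phi (\<theta> j)) ` {..<n+3} = u ` {..<1+1} \<union> v ` {..<n+1}"
    unfolding phi\<theta> m by (rule join_image)
  let ?S = "u ` {..<1+1} \<union> v ` {..<n+1}"
  have M1S: "MV.span (Mset n 1) \<subseteq> MV.span ?S"
  proof (rule MV.span_mono, rule subsetI)
    fix x :: "'a mpoly" assume "x \<in> Mset n 1"
    then obtain a where "a \<le> 1" "x = M n a (1 - a)" unfolding Mset_def by auto
    then show "x \<in> ?S" using \<theta>b unfolding u_def by force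
  qed
  have F1: "homog_in {n+1, n+2} 1 q \<Longrightarrow> q \<in> MV.span ?S" for q
    using F_span[of n 1 q] M1S by blast
  have vS: "phi (M n a (n + 1 - a)) \<in> MV.span ?S" if "a \<le> n + 1" "a \<noteq> a0" for a
  proof -
    define j where "j = (if a < a0 then a else a - 1)"
    have "j < n + 1" "\<sigma> j = a" using that a0 unfolding j_def \<sigma>_def by auto
    then show ?thesis unfolding v_def by (intro MV.span_base) force
  qed
  have a0S: "phi (M n a0 (n + 1 - a0)) \<in> MV.span ?S"
  proof -
    define \<delta> where "\<delta> a = Poly_Mapping.lookup D0 (EXP n a (n + 1 - a))" for a
    have "phi D0 = (\<Sum>i\<le>n. mvar i * diff_act D0 (p i)) + diff_act D0 g" by (rule f_D[OF D0(1)])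
    also have "\<dots> = diff_act D0 g" using D0(3) unfolding Killp_def by simp
    finally have "phi D0 = diff_act D0 g" .
    moreover have "homog_in {n+1, n+2} (d - (n+1)) (diff_act D0 g)" by (rule homog_diff_act(1)[OF g_hom D0(1)])
    ultimately have pD0: "phi D0 \<in> MV.span ?S" using F1 d by simp
    have "phi D0 = phi (fsum n (n+1) \<delta>)" using form_repr[OF D0(1)] unfolding \<delta>_def by simp
    also have "\<dots> = (\<Sum>a\<le>n+1. mconst (\<delta> a) * phi (M n a (n + 1 - a)))"
      unfolding fsum_def diff_act_lincomb ..
    also have "\<dots> = mconst (\<delta> a0) * phi (M n a0 (n + 1 - a0)) + (\<Sum>a\<in>{..n+1} - {a0}. mconst (\<delta> a) * phi (M n a (n + 1 - a)))"
      using a0(1) by (subst sum.remove[of _ a0]) auto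
    finally have e: "mconst (\<delta> a0) * phi (M n a0 (n + 1 - a0)) = phi D0 - (\<Sum>a\<in>{..n+1} - {a0}. mconst (\<delta> a) * phi (M n a (n + 1 - a)))"
      by (simp add: algebra_simps)
    have "(\<Sum>a\<in>{..n+1} - {a0}. mconst (\<delta> a) * phi (M n a (n + 1 - a))) \<in> MV.span ?S"
      using vS by (intro MV.span_sum MV.span_scale) auto
    then have "mconst (\<delta> a0) * phi (M n a0 (n + 1 - a0)) \<in> MV.span ?S"
      unfolding e using pD0 by (rule MV.span_diff[rotated])
    then have "mconst (inverse (\<delta> a0)) * (mconst (\<delta> a0) * phi (M n a0 (n + 1 - a0))) \<in> MV.span ?S"
      by (rule MV.span_scale)
    then show ?thesis using mconst_inverse_cancel[of "\<delta> a0"] a0(2) unfolding \<delta>_def by simp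
  qed
  have S: "\<forall>\<psi>\<in>Rdeg n (n+1). phi \<psi> \<in> MV.span ((\<lambda>j. phi (\<theta> j)) ` {..<n+3})"
  proof
    fix \<psi> :: "'a mpoly" assume \<psi>: "\<psi> \<in> Rdeg n (n+1)"
    show "phi \<psi> \<in> MV.span ((\<lambda>j. phi (\<theta> j)) ` {..<n+3})"
      unfolding img
    proof (rule phi_span[OF _ _ \<psi>])
      fix a :: nat assume a: "a \<le> n + 1"
      show "phi (M n a (n + 1 - a)) \<in> MV.span ?S"
        using vS[OF a] a0S by (cases "a = a0") auto
    next
      fix j b :: nat assume j: "j \<le> n" and b: "b \<le> n + 1 - 1"
      have "homog_in {n+1, n+2} ((d - 1) - (n + 1 - 1)) (diff_act (M n b (n + 1 - 1 - b)) (p j))"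
        by (rule homog_diff_act(1)[OF p_hom[OF j] homog_M']) (use b in simp)
      then have "homog_in {n+1, n+2} 1 (diff_act (M n b (n + 1 - 1 - b)) (p j))" using d by simp
      then show "diff_act (M n b (n + 1 - 1 - b)) (p j) \<in> MV.span ?S" by (rule F1)
    qed
  qed
  show ?thesis using R I S unfolding isb_def by blast
qed

end


lemma mono_deg_one:
  assumes "mono_deg e = 1"
  shows "\<exists>t. e = Poly_Mapping.single t 1"
proof -
  have "e \<noteq> 0" using assms by (auto simp: mono_deg_def)
  then obtain t where t: "t \<in> Poly_Mapping.keys e" by (metis keys_eq_empty ex_in_conv)
  have "mono_deg e = Poly_Mapping.lookup e t + (\<Sum>j\<in>Poly_Mapping.keys e - {t}. Poly_Mapping.lookup e j)"
    unfolding mono_deg_def using t by (simp add: sum.remove)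
  moreover have "Poly_Mapping.lookup e t \<ge> 1" using t by (simp add: in_keys_iff)
  ultimately have lt: "Poly_Mapping.lookup e t = 1" and z: "(\<Sum>j\<in>Poly_Mapping.keys e - {t}. Poly_Mapping.lookup e j) = 0"
    using assms by auto
  have "Poly_Mapping.lookup e j = 0" if "j \<noteq> t" for j
  proof (cases "j \<in> Poly_Mapping.keys e")
    case True then show ?thesis using z that by simp
  qed (simp add: in_keys_iff)
  then have "e = Poly_Mapping.single t 1"
    by (intro poly_mapping_eqI) (auto simp: lookup_single when_def lt)
  then show ?thesis by blast
qed

lemma lin_repr:
  assumes "homog_in {..N} 1 (l :: 'a::comm_ring_1 mpoly)"
  shows "l = (\<Sum>t\<le>N. mconst (Poly_Mapping.lookup l (Poly_Mapping.single t 1)) * mvar t)"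
proof (rule poly_mapping_eqI)
  fix e
  have r: "Poly_Mapping.lookup (\<Sum>t\<le>N. mconst (Poly_Mapping.lookup l (Poly_Mapping.single t 1)) * mvar t) e
      = (\<Sum>t\<le>N. if Poly_Mapping.single t 1 = e then Poly_Mapping.lookup l e else 0)"
    unfolding lookup_sum mvar_def mconst_mult_single by (intro sum.cong refl) (auto simp: lookup_single when_def)
  show "Poly_Mapping.lookup l e = Poly_Mapping.lookup (\<Sum>t\<le>N. mconst (Poly_Mapping.lookup l (Poly_Mapping.single t 1)) * mvar t) e"
  proof (cases "e \<in> Poly_Mapping.keys l")
    case True
    then have ke: "Poly_Mapping.keys e \<subseteq> {..N}" "mono_deg e = 1" using assms unfolding homog_in_def by auto
    then obtain t where t: "e = Poly_Mapping.single t 1" using mono_deg_one by blast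
    then have tN: "t \<le> N" using ke by auto
    have "(\<Sum>s\<le>N. if Poly_Mapping.single s 1 = e then Poly_Mapping.lookup l e else 0) = (\<Sum>s\<le>N. if s = t then Poly_Mapping.lookup l e else 0)"
      using t by (intro sum.cong refl) (auto simp: single_one_inj single_one_inj[simplified])
    then show ?thesis using r tN by simp
  next
    case False
    then have z: "Poly_Mapping.lookup l e = 0" by (simp add: in_keys_iff)
    have "(\<Sum>t\<le>N. if Poly_Mapping.single t 1 = e then Poly_Mapping.lookup l e else 0) = 0"
      by (rule sum.neutral) (simp add: z)
    then show ?thesis using r z by simp
  qed
qed

context perazzo
begin

lemma mvar_uv1: "mvar (n+1) = (M n 1 0 :: 'a mpoly)"
  by (simp add: mvar_def M_def EXP_def)
lemma mvar_uv2: "mvar (n+2) = (M n 0 1 :: 'a mpoly)"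
  by (simp add: mvar_def M_def EXP_def)

lemma lin_act:
  assumes l: "l \<in> Rdeg n 1" and q: "homog_in {n+1, n+2} k q"
  shows "diff_act l q = diff_act (mconst (Poly_Mapping.lookup l (Poly_Mapping.single (n+1) 1)) * mvar (n+1)
                               + mconst (Poly_Mapping.lookup l (Poly_Mapping.single (n+2) 1)) * mvar (n+2)) q"
proof -
  let ?c = "\<lambda>t. Poly_Mapping.lookup l (Poly_Mapping.single t 1)"
  have le: "l = (\<Sum>t\<le>n+2. mconst (?c t) * mvar t)" using lin_repr l unfolding Rdeg_def by blast
  have "diff_act l q = diff_act (\<Sum>t\<le>n+2. mconst (?c t) * mvar t) q"
    by (rule arg_cong[where f = "\<lambda>x. diff_act x q", OF le])
  also have "\<dots> = (\<Sum>t\<le>n+2. mconst (?c t) * diff_act (mvar t) q)" by (rule diff_act_lincomb)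
  also have "\<dots> = (\<Sum>t\<le>n. mconst (?c t) * diff_act (mvar t) q) + mconst (?c (n+1)) * diff_act (mvar (n+1)) q
                    + mconst (?c (n+2)) * diff_act (mvar (n+2)) q"
    by (simp add: numeral_2_eq_2)
  also have "(\<Sum>t\<le>n. mconst (?c t) * diff_act (mvar t) q) = 0"
    by (intro sum.neutral ballI) (auto simp: diff_mvar_nox[OF homog_nox[OF q]])
  finally show ?thesis by (simp add: diff_act_add_left diff_act_scale_left)
qed

lemma KER:
  assumes l: "l \<in> Rdeg n 1"
  shows "\<exists>\<theta>0\<in>Rdeg n 2. phi \<theta>0 \<noteq> 0 \<and> phi (l * \<theta>0) = 0"
proof -
  define k where "k = d - 2"
  have k2: "k \<ge> 2" using d4 by (simp add: k_def)
  define L where "L = mconst (Poly_Mapping.lookup l (Poly_Mapping.single (n+1) 1)) * mvar (n+1)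
                    + mconst (Poly_Mapping.lookup l (Poly_Mapping.single (n+2) 1)) * (mvar (n+2) :: 'a mpoly)"
  have Lh: "homog_in {n+1, n+2} 1 L" unfolding L_def
    using homog_mvar[of "{n+1, n+2}" "n+1"] homog_mvar[of "{n+1, n+2}" "n+2"] by (intro homog_add homog_scale) auto
  define w where "w a = diff_act L (M n a (k - a))" for a
  have wh: "w a \<in> MV.span (Mset n (k - 1))" if "a < k + 1" for a
  proof -
    have "homog_in {n+1, n+2} (k - 1) (w a)" unfolding w_def
      by (rule homog_diff_act(1)[OF homog_M' Lh]) (use that in simp)
    then show ?thesis by (rule F_span)
  qed
  have "\<not> fam_indep w (k + 1)"
  proof
    assume "fam_indep w (k + 1)"
    then have "k + 1 \<le> card (Mset n (k - 1) :: 'a mpoly set)" using fam_steinitz[OF _ Mset_finite wh] by simp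
    then show False using Mset_card[of n "k - 1", where 'a='a] k2 by simp
  qed
  then obtain c where c0: "(\<Sum>a<k+1. mconst (c a) * w a) = 0" and a0: "\<exists>a<k+1. c a \<noteq> 0"
    unfolding fam_indep_def by blast
  define q0 where "q0 = fsum n k c"
  have q0h: "homog_in {n+1, n+2} k q0" unfolding q0_def by (rule homog_fsum)
  have q0nz: "q0 \<noteq> 0" using a0 fsum_zero[of n k c] unfolding q0_def by (auto simp: less_Suc_eq_le)
  have Lq0: "diff_act L q0 = 0"
    using c0 unfolding q0_def fsum_def w_def
    by (simp add: diff_act_sum_right diff_act_scale_right lessThan_Suc_atMost[symmetric] del: sum.lessThan_Suc)
  have "q0 \<in> phi ` Rdeg n 2" by (rule F_image) (use d4 q0h in \<open>simp_all add: k_def\<close>)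
  then obtain \<theta>0 where t0: "\<theta>0 \<in> Rdeg n 2" "phi \<theta>0 = q0" by blast
  have "phi (l * \<theta>0) = diff_act l q0" using t0 by (simp add: diff_act_mult)
  also have "\<dots> = diff_act L q0" unfolding L_def by (rule lin_act[OF l q0h])
  finally show ?thesis using t0 q0nz Lq0 by auto
qed

lemma noWLP:
  assumes b2: "isb 2 h \<theta>2" and b3: "isb 3 h \<theta>3"
  shows "\<not> has_WLP n f"
proof
  assume "has_WLP n f"
  then obtain l where l: "l \<in> Rdeg n 1" and W: "\<forall>i.
      (\<forall>\<theta>\<in>Rdeg n i. l * \<theta> \<in> Ann n f \<longrightarrow> \<theta> \<in> Ann n f) \<or>
      (\<forall>\<psi>\<in>Rdeg n (Suc i). \<exists>\<theta>\<in>Rdeg n i. \<psi> - l * \<theta> \<in> Ann n f)"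
    unfolding has_WLP_def by blast
  obtain \<theta>0 where t0: "\<theta>0 \<in> Rdeg n 2" "phi \<theta>0 \<noteq> 0" "phi (l * \<theta>0) = 0" using KER[OF l] by blast
  have lR: "l * \<theta> \<in> Rdeg n 3" if th: "\<theta> \<in> Rdeg n 2" for \<theta>
  proof -
    have h: "homog_in {..n+2} (1 + 2) (l * \<theta>)" by (rule homog_mult) (use l th in \<open>auto simp: Rdeg_def\<close>)
    have e: "(1::nat) + 2 = 3" by simp
    show ?thesis using h unfolding Rdeg_def e by simp
  qed
  from W[rule_format, of 2] show False
  proof
    assume inj: "\<forall>\<theta>\<in>Rdeg n 2. l * \<theta> \<in> Ann n f \<longrightarrow> \<theta> \<in> Ann n f"
    have "l * \<theta>0 \<in> Ann n f" using Rdeg_Ann[OF lR[OF t0(1)]] t0(3) by simp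
    then have "\<theta>0 \<in> Ann n f" using inj t0(1) by blast
    then show False using Rdeg_Ann[OF t0(1)] t0(2) by simp
  next
    assume surj: "\<forall>\<psi>\<in>Rdeg n (Suc 2). \<exists>\<theta>\<in>Rdeg n 2. \<psi> - l * \<theta> \<in> Ann n f"
    have "\<forall>j\<in>{..<h}. \<exists>\<theta>. \<theta> \<in> Rdeg n 2 \<and> phi (\<theta>3 j) = phi (l * \<theta>)"
    proof
      fix j assume "j \<in> {..<h}"
      then have t3: "\<theta>3 j \<in> Rdeg n 3" using b3 unfolding isb_def by auto
      then obtain \<theta> where th: "\<theta> \<in> Rdeg n 2" "\<theta>3 j - l * \<theta> \<in> Ann n f" using surj by (auto simp: numeral_3_eq_3)
      have "\<theta>3 j - l * \<theta> \<in> Rdeg n 3" by (rule Rdeg_diff[OF t3 lR[OF th(1)]])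
      then have "phi (\<theta>3 j - l * \<theta>) = 0" using Rdeg_Ann th(2) by blast
      then show "\<exists>\<theta>. \<theta> \<in> Rdeg n 2 \<and> phi (\<theta>3 j) = phi (l * \<theta>)" using th(1) by (auto simp: diff_act_diff_left)
    qed
    then obtain \<theta>' where t': "\<forall>j\<in>{..<h}. \<theta>' j \<in> Rdeg n 2 \<and> phi (\<theta>3 j) = phi (l * \<theta>' j)"
      using bchoice[of "{..<h}" "\<lambda>j \<theta>. \<theta> \<in> Rdeg n 2 \<and> phi (\<theta>3 j) = phi (l * \<theta>)"] by blast
    define w where "w j = (if j < 1 then phi \<theta>0 else phi (\<theta>' (j - 1)))" for j
    have fi: "fam_indep w (1 + h)"
      unfolding w_def
    proof (rule fam_indep_join)
      fix c c' :: "nat \<Rightarrow> 'a" assume s: "(\<Sum>j<1. mconst (c j) * phi \<theta>0) + (\<Sum>j<h. mconst (c' j) * phi (\<theta>' j)) = 0"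
      have "diff_act l ((\<Sum>j<1. mconst (c j) * phi \<theta>0) + (\<Sum>j<h. mconst (c' j) * phi (\<theta>' j))) = 0" using s by simp
      then have "(\<Sum>j<h. mconst (c' j) * phi (\<theta>3 j)) = 0"
        using t' t0(3) by (simp add: diff_act_add_right diff_act_sum_right diff_act_scale_right diff_act_mult[symmetric])
      then have c': "\<forall>j<h. c' j = 0" using b3 unfolding isb_def fam_indep_def by blast
      then have "mconst (c 0) * phi \<theta>0 = 0" using s by simp
      then have "c 0 = 0" using mconst_mult_eq_0 t0(2) by blast
      then show "(\<forall>j<1. c j = 0) \<and> (\<forall>j<h. c' j = 0)" using c' by auto
    qed
    have "1 + h \<le> card ((\<lambda>j. phi (\<theta>2 j)) ` {..<h})"
    proof (rule fam_steinitz[OF fi])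
      show "finite ((\<lambda>j. phi (\<theta>2 j)) ` {..<h})" by simp
      fix j assume "j < 1 + h"
      then have "(j < 1 \<and> w j = phi \<theta>0) \<or> (j - 1 < h \<and> w j = phi (\<theta>' (j - 1)))" unfolding w_def by auto
      then show "w j \<in> MV.span ((\<lambda>j. phi (\<theta>2 j)) ` {..<h})"
        using b2 t0(1) t' unfolding isb_def by auto
    qed
    also have "\<dots> \<le> h" using card_image_le[of "{..<h}" "\<lambda>j. phi (\<theta>2 j)"] by simp
    finally show False by simp
  qed
qed

end


context perazzo
begin

lemma case1:
  assumes d: "d = n + 1"
  shows "(\<forall>i. hvec n f i = (if i = 0 then 1 else if i < d then n + 3 else if i = d then 1 else 0)) \<and> \<not> has_WLP n f"
proof
  show "\<forall>i. hvec n f i = (if i = 0 then 1 else if i < d then n + 3 else if i = d then 1 else 0)"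
  proof
    fix i
    consider "i = 0" | "1 \<le> i \<and> i < d" | "i = d" | "d < i" by linarith
    then show "hvec n f i = (if i = 0 then 1 else if i < d then n + 3 else if i = d then 1 else 0)"
    proof cases
      case 1 then show ?thesis using isb_hvec[OF H0] by simp
    next
      case 2
      then obtain \<theta> where "isb i (d + 2) \<theta>" using Hmid[of i] d by blast
      then show ?thesis using 2 d isb_hvec by auto
    next
      case 3
      then obtain \<theta> where "isb d 1 \<theta>" using Hd by blast
      then show ?thesis using 3 d4 isb_hvec by auto
    next
      case 4 then show ?thesis using isb_hvec[OF Hbig[OF 4]] by auto
    qed
  qed
  obtain \<theta>2 where "isb 2 (d + 2) \<theta>2" using Hmid[of 2] d d4 by auto
  moreover obtain \<theta>3 where "isb 3 (d + 2) \<theta>3" using Hmid[of 3] d d4 by auto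
  ultimately show "\<not> has_WLP n f" by (rule noWLP)
qed

lemma case2:
  assumes d: "d = n + 2"
  shows "(\<forall>i. hvec n f i = (if i = 0 then 1 else if i = 1 then n + 3 else if i < d - 1 then n + 4
                               else if i = d - 1 then n + 3 else if i = d then 1 else 0)) \<and> \<not> has_WLP n f"
proof
  show "\<forall>i. hvec n f i = (if i = 0 then 1 else if i = 1 then n + 3 else if i < d - 1 then n + 4
                               else if i = d - 1 then n + 3 else if i = d then 1 else 0)"
  proof
    fix i
    consider "i = 0" | "i = 1" | "2 \<le> i \<and> i < d - 1" | "i = d - 1" | "i = d" | "d < i" using d4 by linarith
    then show "hvec n f i = (if i = 0 then 1 else if i = 1 then n + 3 else if i < d - 1 then n + 4
                               else if i = d - 1 then n + 3 else if i = d then 1 else 0)"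
    proof cases
      case 1 then show ?thesis using isb_hvec[OF H0] by simp
    next
      case 2
      then obtain \<theta> where "isb 1 (n + 3) \<theta>" using H1b d by blast
      then show ?thesis using 2 isb_hvec by auto
    next
      case 3
      then obtain \<theta> where "isb i (d + 2) \<theta>" using Hmid[of i] d by auto
      then show ?thesis using 3 d isb_hvec by auto
    next
      case 4
      then obtain \<theta> where "isb (n + 1) (n + 3) \<theta>" using Hd1b d by blast
      then show ?thesis using 4 d isb_hvec by auto
    next
      case 5
      then obtain \<theta> where "isb d 1 \<theta>" using Hd by blast
      then show ?thesis using 5 d4 isb_hvec by auto
    next
      case 6 then show ?thesis using isb_hvec[OF Hbig[OF 6]] d4 by auto
    qed
  qed
  obtain \<theta>2 where "isb 2 (d + 2) \<theta>2" using Hmid[of 2] d d4 by auto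
  moreover obtain \<theta>3 where "isb 3 (d + 2) \<theta>3" using Hmid[of 3] d n2 by auto
  ultimately show "\<not> has_WLP n f" by (rule noWLP)
qed

end

theorem corollary4p7:
  fixes f :: "'a::field_char_0 mpoly" and n d :: nat
  assumes "algebraically_closed TYPE('a)"
    and "n > 2"
    and "is_perazzo n d f"
  shows "(d = n + 1 \<longrightarrow>
            (\<forall>i. hvec n f i = (if i = 0 then 1 else if i < d then n + 3 else if i = d then 1 else 0))
            \<and> \<not> has_WLP n f)
       \<and> (d = n + 2 \<longrightarrow>
            (\<forall>i. hvec n f i = (if i = 0 then 1 else if i = 1 then n + 3 else if i < d - 1 then n + 4
                               else if i = d - 1 then n + 3 else if i = d then 1 else 0))
            \<and> \<not> has_WLP n f)"
proof -
  obtain p :: "nat \<Rightarrow> 'a mpoly" and g where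
    ph: "\<forall>i\<le>n. homog_in {n+1, n+2} (d - 1) (p i)"
    and pi: "\<forall>c::nat \<Rightarrow> 'a. (\<Sum>i\<le>n. mconst (c i) * p i) = 0 \<longrightarrow> (\<forall>i\<le>n. c i = 0)"
    and gh: "homog_in {n+1, n+2} d g"
    and fe: "f = (\<Sum>i\<le>n. mvar i * p i) + g"
    using assms(3) unfolding is_perazzo_def by blast
  have loc: "perazzo n d p g f" if "d = n + 1 \<or> d = n + 2"
    by (unfold_locales) (use assms(2) that ph pi gh fe in auto)
  show ?thesis
  proof (rule conjI; rule impI)
    assume d: "d = n + 1"
    show "(\<forall>i. hvec n f i = (if i = 0 then 1 else if i < d then n + 3 else if i = d then 1 else 0)) \<and> \<not> has_WLP n f"
      using perazzo.case1[OF loc d] d by simp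
  next
    assume d: "d = n + 2"
    show "(\<forall>i. hvec n f i = (if i = 0 then 1 else if i = 1 then n + 3 else if i < d - 1 then n + 4
                               else if i = d - 1 then n + 3 else if i = d then 1 else 0)) \<and> \<not> has_WLP n f"
      using perazzo.case2[OF loc d] d by simp
  qed
qed


end
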